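(* Let $\{a_n\}_{n\ge1}$ be complex numbers with $\sum_{n=1}^\infty|a_n|^2(\log n)^3<\infty$, and for $t\in[0,1]$ let $f_t(z)=\sum_{n=1}^\infty r_n(t)a_nz^n$ ($z\in\mathbb D$). Then for almost every $t\in[0,1]$, $$\int_0^1(1-r)\left(\log\frac{1}{1-r}\right)^2\left[M_\infty(r,f_t')\right]^2\,dr<\infty.$$
   Context: $\mathbb D$ is the open unit disc and $M_\infty(r,f)=\max_{|z|=r}|f(z)|$. The Rademacher functions are $r_0(t)=1$ on $(0,1/2)$, $-1$ on $(1/2,1)$, $0$ at $t=0,1/2,1$, and $r_n(t)=r_0(2^nt)$ (extended 1-periodically) for $n\ge1$. *)

theory Defs
  imports "HOL-Analysis.Analysis"
begin

definition rad0 :: "real \<Rightarrow> real" where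
  "rad0 x = (let y = frac x in if 0 < y \<and> y < 1/2 then 1 else if 1/2 < y then -1 else 0)"

definition rademacher :: "nat \<Rightarrow> real \<Rightarrow> real" where
  "rademacher n t = rad0 (2 ^ n * t)"

definition Minf :: "real \<Rightarrow> (complex \<Rightarrow> complex) \<Rightarrow> real" where
  "Minf r g = Sup ((\<lambda>z. norm (g z)) ` {z. norm z = r})"

definition rad_series :: "(nat \<Rightarrow> complex) \<Rightarrow> real \<Rightarrow> complex \<Rightarrow> complex" where
  "rad_series a t z = (\<Sum>n. of_real (rademacher (Suc n) t) * a (Suc n) * z ^ Suc n)"

end

theory Submission
  imports Defs
begin

lemma rad0_abs: "\<bar>rad0 x\<bar> \<le> 1"
  by (simp add: rad0_def Let_def)

lemma rad0_half: "rad0 (x + 1/2) = - rad0 x"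
proof -
  have f: "frac (x + 1/2) = (if frac x < 1/2 then frac x + 1/2 else frac x - 1/2)"
    using frac_add[of x "1/2"] frac_lt_1[of x] by (simp add: frac_eq)
  show ?thesis using frac_lt_1[of x] frac_ge_0[of x]
    unfolding rad0_def Let_def f by auto
qed

lemma rad0_int: "rad0 (x + of_int k) = rad0 x"
  by (simp add: rad0_def frac_add_of_int_right)

lemma rademacher_shift_lt:
  assumes "m < n" shows "rademacher n (t + 1/2^(Suc m)) = rademacher n t"
proof -
  have "(2::real)^n / 2^(Suc m) = 2^(n - Suc m)"
    using assms by (simp add: power_diff)
  then have "(2::real)^n * (t + 1/2^(Suc m)) = 2^n * t + of_int (2^(n - Suc m))"
    by (simp add: algebra_simps)
  then show ?thesis unfolding rademacher_def using rad0_int[of "2^n*t" "2^(n - Suc m)"] by simp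
qed

lemma rademacher_shift_eq: "rademacher m (t + 1/2^(Suc m)) = - rademacher m t"
proof -
  have "(2::real)^m * (t + 1/2^(Suc m)) = 2^m * t + 1/2"
    by (simp add: algebra_simps)
  then show ?thesis unfolding rademacher_def by (simp add: rad0_half)
qed

lemma rademacher_period: "rademacher n (t + 1) = rademacher n t"
proof -
  have "(2::real)^n * (t + 1) = 2^n * t + of_int (2^n)"
    by (simp add: algebra_simps)
  then show ?thesis unfolding rademacher_def using rad0_int[of "2^n*t" "2^n"] by simp
qed

lemma rademacher_abs: "\<bar>rademacher n t\<bar> \<le> 1"
  by (simp add: rademacher_def rad0_abs)

lemma rad0_measurable[measurable]: "rad0 \<in> borel_measurable borel"
  unfolding rad0_def Let_def frac_def by measurable

lemma rademacher_measurable[measurable]: "rademacher n \<in> borel_measurable borel"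
  unfolding rademacher_def by measurable


lemma shift_inv:
  fixes F :: "real \<Rightarrow> ennreal"
  assumes [measurable]: "F \<in> borel_measurable borel"
    and per: "\<And>t. F (t + 1) = F t" and h: "0 \<le> h" "h \<le> 1"
  shows "(\<integral>\<^sup>+t. indicator {0..<1} t * F (t + h) \<partial>lborel) = (\<integral>\<^sup>+t. indicator {0..<1} t * F t \<partial>lborel)"
proof -
  have sp: "indicator {0..<1} t * F (t + h) = indicator {0..<1-h} t * F (t + h) + indicator {1-h..<1} t * F (t + h)" for t
    using h by (auto simp: indicator_def)
  have A: "(\<integral>\<^sup>+t. indicator {0..<1-h} t * F (t + h) \<partial>lborel) = (\<integral>\<^sup>+u. indicator {h..<1} u * F u \<partial>lborel)"
  proof -
    have "(\<integral>\<^sup>+u. indicator {h..<1} u * F u \<partial>lborel) = (\<integral>\<^sup>+x. indicator {h..<1} (h + x) * F (h + x) \<partial>lborel)"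
      using nn_integral_real_affine[of "\<lambda>u. indicator {h..<1} u * F u" 1 h] by simp
    also have "\<dots> = (\<integral>\<^sup>+t. indicator {0..<1-h} t * F (t + h) \<partial>lborel)"
      by (intro nn_integral_cong) (auto simp: indicator_def add.commute)
    finally show ?thesis by simp
  qed
  have B: "(\<integral>\<^sup>+t. indicator {1-h..<1} t * F (t + h) \<partial>lborel) = (\<integral>\<^sup>+u. indicator {0..<h} u * F u \<partial>lborel)"
  proof -
    have "(\<integral>\<^sup>+u. indicator {1..<1+h} u * F u \<partial>lborel) = (\<integral>\<^sup>+x. indicator {1..<1+h} (h + x) * F (h + x) \<partial>lborel)"
      using nn_integral_real_affine[of "\<lambda>u. indicator {1..<1+h} u * F u" 1 h] by simp
    also have "\<dots> = (\<integral>\<^sup>+t. indicator {1-h..<1} t * F (t + h) \<partial>lborel)"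
      by (intro nn_integral_cong) (auto simp: indicator_def add.commute)
    finally have 1: "(\<integral>\<^sup>+t. indicator {1-h..<1} t * F (t + h) \<partial>lborel) = (\<integral>\<^sup>+u. indicator {1..<1+h} u * F u \<partial>lborel)" by simp
    have "(\<integral>\<^sup>+u. indicator {1..<1+h} u * F u \<partial>lborel) = (\<integral>\<^sup>+x. indicator {1..<1+h} (1 + x) * F (1 + x) \<partial>lborel)"
      using nn_integral_real_affine[of "\<lambda>u. indicator {1..<1+h} u * F u" 1 1] by simp
    also have "\<dots> = (\<integral>\<^sup>+u. indicator {0..<h} u * F u \<partial>lborel)"
      by (intro nn_integral_cong) (auto simp: indicator_def add.commute per)
    finally show ?thesis using 1 by simp
  qed
  have "(\<integral>\<^sup>+t. indicator {0..<1} t * F (t + h) \<partial>lborel)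
      = (\<integral>\<^sup>+t. indicator {0..<1-h} t * F (t + h) \<partial>lborel) + (\<integral>\<^sup>+t. indicator {1-h..<1} t * F (t + h) \<partial>lborel)"
    unfolding sp by (rule nn_integral_add) auto
  also have "\<dots> = (\<integral>\<^sup>+u. indicator {h..<1} u * F u \<partial>lborel) + (\<integral>\<^sup>+u. indicator {0..<h} u * F u \<partial>lborel)"
    using A B by simp
  also have "\<dots> = (\<integral>\<^sup>+u. indicator {h..<1} u * F u + indicator {0..<h} u * F u \<partial>lborel)"
    by (rule nn_integral_add[symmetric]) auto
  also have "\<dots> = (\<integral>\<^sup>+t. indicator {0..<1} t * F t \<partial>lborel)"
    using h by (intro nn_integral_cong) (auto simp: indicator_def)
  finally show ?thesis .
qed

lemma cosh_abs_le: "\<bar>e\<bar> \<le> 1 \<Longrightarrow> cosh (v * e) \<le> cosh (v::real)"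
proof -
  assume e: "\<bar>e\<bar> \<le> 1"
  have "\<bar>v * e\<bar> \<le> \<bar>v\<bar>" using e by (simp add: abs_mult mult_left_le)
  then have "cosh \<bar>v * e\<bar> \<le> cosh \<bar>v\<bar>" by (subst cosh_real_nonneg_le_iff) auto
  then show ?thesis by (simp only: cosh_real_abs)
qed

lemma ind01_integral: "(\<integral>\<^sup>+t. indicator {0..<1::real} t \<partial>lborel) = 1"
  by simp

lemma mgf:
  assumes "finite S"
  shows "(\<integral>\<^sup>+t. indicator {0..<1} t * ennreal (exp (\<Sum>n\<in>S. v n * rademacher n t)) \<partial>lborel)
          \<le> ennreal (\<Prod>n\<in>S. cosh (v n))"
  using assms
proof (induction S rule: finite_linorder_min_induct)
  case empty
  then show ?case by simp
next
  case (insert b A)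
  define h :: real where "h = 1/2^(Suc b)"
  have "(1::real) \<le> 2^(Suc b)" by (rule one_le_power) simp
  then have h: "0 \<le> h" "h \<le> 1" by (auto simp: h_def)
  define G where "G t = exp (\<Sum>n\<in>A. v n * rademacher n t)" for t
  define F where "F t = ennreal (exp (v b * rademacher b t) * G t)" for t
  have bA: "b \<notin> A" using insert by auto
  have Feq: "ennreal (exp (\<Sum>n\<in>insert b A. v n * rademacher n t)) = F t" for t
    using insert bA by (simp add: F_def G_def exp_add)
  have [measurable]: "F \<in> borel_measurable borel" unfolding F_def G_def by measurable
  have Gs: "G (t + h) = G t" for t
  proof -
    have "rademacher n (t + h) = rademacher n t" if "n \<in> A" for n
    proof -
      have "b < n" using insert that by auto
      then show ?thesis by (simp only: h_def rademacher_shift_lt)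
    qed
    then show ?thesis unfolding G_def by simp
  qed
  have Fs: "F (t + h) = ennreal (exp (- v b * rademacher b t) * G t)" for t
  proof -
    have "rademacher b (t+h) = - rademacher b t" unfolding h_def by (rule rademacher_shift_eq)
    then show ?thesis unfolding F_def Gs by simp
  qed
  have per: "F (t + 1) = F t" for t
    unfolding F_def G_def by (simp add: rademacher_period)
  define I where "I = (\<integral>\<^sup>+t. indicator {0..<1} t * F t \<partial>lborel)"
  have "2 * I = I + I" by (simp add: mult_2)
  also have "\<dots> = (\<integral>\<^sup>+t. indicator {0..<1} t * F t \<partial>lborel) + (\<integral>\<^sup>+t. indicator {0..<1} t * F (t + h) \<partial>lborel)"
    unfolding I_def using shift_inv[of F h] per h by simp
  also have "\<dots> = (\<integral>\<^sup>+t. indicator {0..<1} t * F t + indicator {0..<1} t * F (t + h) \<partial>lborel)"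
    by (rule nn_integral_add[symmetric]) auto
  also have "\<dots> = (\<integral>\<^sup>+t. indicator {0..<1} t * ennreal (2 * cosh (v b * rademacher b t) * G t) \<partial>lborel)"
  proof (intro nn_integral_cong)
    fix t
    have "F t + F (t + h) = ennreal (exp (v b * rademacher b t) * G t + exp (- v b * rademacher b t) * G t)"
      apply (subst Fs) unfolding F_def by (subst ennreal_plus) (auto simp: G_def)
    also have "\<dots> = ennreal (2 * cosh (v b * rademacher b t) * G t)"
      by (simp add: cosh_def algebra_simps)
    finally show "indicator {0..<1} t * F t + indicator {0..<1} t * F (t + h) = indicator {0..<1} t * ennreal (2 * cosh (v b * rademacher b t) * G t)"
      by (metis distrib_left)
  qed
  also have "\<dots> \<le> (\<integral>\<^sup>+t. ennreal (2 * cosh (v b)) * (indicator {0..<1} t * ennreal (G t)) \<partial>lborel)"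
  proof (intro nn_integral_mono)
    fix t
    have "2 * cosh (v b * rademacher b t) * G t \<le> 2 * cosh (v b) * G t"
      using cosh_abs_le[OF rademacher_abs, of "v b" b t] by (intro mult_right_mono) (auto simp: G_def)
    then have "ennreal (2 * cosh (v b * rademacher b t) * G t) \<le> ennreal (2 * cosh (v b)) * ennreal (G t)"
      by (subst ennreal_mult'[symmetric]) (auto intro: ennreal_leI)
    then show "indicator {0..<1} t * ennreal (2 * cosh (v b * rademacher b t) * G t) \<le> ennreal (2 * cosh (v b)) * (indicator {0..<1} t * ennreal (G t))"
      by (auto simp: indicator_def)
  qed
  also have "\<dots> = ennreal (2 * cosh (v b)) * (\<integral>\<^sup>+t. indicator {0..<1} t * ennreal (G t) \<partial>lborel)"
    by (rule nn_integral_cmult) (auto simp: G_def)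
  also have "\<dots> \<le> ennreal (2 * cosh (v b)) * ennreal (\<Prod>n\<in>A. cosh (v n))"
    using insert(3) unfolding G_def by (intro mult_left_mono) auto
  also have "\<dots> = 2 * ennreal (\<Prod>n\<in>insert b A. cosh (v n))"
  proof -
    have p: "0 \<le> (\<Prod>n\<in>A. cosh (v n))" by (rule prod_nonneg) auto
    have "ennreal (2 * cosh (v b)) * ennreal (\<Prod>n\<in>A. cosh (v n)) = ennreal 2 * ennreal (cosh (v b) * (\<Prod>n\<in>A. cosh (v n)))"
    proof -
      have c: "0 \<le> cosh (v b) * (\<Prod>n\<in>A. cosh (v n))" using p by (simp add: cosh_real_pos less_imp_le)
      have "ennreal (2 * cosh (v b)) * ennreal (\<Prod>n\<in>A. cosh (v n)) = ennreal (2 * cosh (v b) * (\<Prod>n\<in>A. cosh (v n)))"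
        using p by (simp add: ennreal_mult[symmetric] cosh_real_pos less_imp_le)
      also have "\<dots> = ennreal 2 * ennreal (cosh (v b) * (\<Prod>n\<in>A. cosh (v n)))"
        unfolding mult.assoc by (rule ennreal_mult) (use c in auto)
      finally show ?thesis .
    qed
    then show ?thesis using insert bA by simp
  qed
  finally have "2 * I \<le> 2 * ennreal (\<Prod>n\<in>insert b A. cosh (v n))" .
  then have "I \<le> ennreal (\<Prod>n\<in>insert b A. cosh (v n))"
    by (simp add: ennreal_mult_le_mult_iff)
  then show ?case unfolding I_def Feq .
qed


lemma mcms_le:
  fixes x :: real
  shows "x * (c - x) \<le> c\<^sup>2 / 4"
proof -
  have "x * (c - x) = -(x - c / 2)\<^sup>2 + c\<^sup>2 / 4"
    by (simp add: field_simps power2_eq_square)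
  also have "\<dots> \<le> 0 + c\<^sup>2 / 4"
    by (intro add_mono) auto
  finally show ?thesis by simp
qed

lemma hoeff_aux:
  fixes h p :: real
  assumes "h \<ge> 0" and "p \<ge> 0"
  defines "L \<equiv> (\<lambda>h. -h * p + ln (1 + p * (exp h - 1)))"
  shows   "L h \<le> h\<^sup>2 / 8"
proof (cases "h = 0")
  case False
  hence h: "h > 0"
    using \<open>h \<ge> 0\<close> by simp
  define L' where "L' = (\<lambda>h. -p + p * exp h / (1 + p * (exp h - 1)))"
  define L'' where "L'' = (\<lambda>h. -(p\<^sup>2) * exp h * exp h / (1 + p * (exp h - 1))\<^sup>2 +
                              p * exp h / (1 + p * (exp h - 1)))"
  define Ls where "Ls = (\<lambda>n. [L, L', L''] ! n)"

  have [simp]: "L 0 = 0" "L' 0 = 0"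
    by (auto simp: L_def L'_def)

  have L': "(L has_real_derivative L' x) (at x)" if "x \<in> {0..h}" for x
  proof -
    have "1 + p * (exp x - 1) > 0"
      using \<open>p \<ge> 0\<close> that by (intro add_pos_nonneg mult_nonneg_nonneg) auto
    thus ?thesis
      unfolding L_def L'_def by (auto intro!: derivative_eq_intros)
  qed

  have L'': "(L' has_real_derivative L'' x) (at x)" if "x \<in> {0..h}" for x
  proof -
    have *: "1 + p * (exp x - 1) > 0"
      using \<open>p \<ge> 0\<close> that by (intro add_pos_nonneg mult_nonneg_nonneg) auto
    show ?thesis
      unfolding L'_def L''_def
      by (insert *, (rule derivative_eq_intros refl | simp)+) (auto simp: divide_simps; algebra)
  qed

  have diff: "\<forall>m t. m < 2 \<and> 0 \<le> t \<and> t \<le> h \<longrightarrow> (Ls m has_real_derivative Ls (Suc m) t) (at t)"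
    using L' L'' by (auto simp: Ls_def nth_Cons split: nat.splits)
  from Taylor[of 2 Ls L 0 h 0 h, OF _ _ diff]
    obtain t where t: "t \<in> {0<..<h}" "L h = L'' t * h\<^sup>2 / 2"
      using \<open>h > 0\<close> by (auto simp: Ls_def lessThan_nat_numeral)
  define u where "u = p * exp t / (1 + p * (exp t - 1))"

  have "L'' t = u * (1 - u)"
    by (simp add: L''_def u_def divide_simps; algebra)
  also have "\<dots> \<le> 1 / 4"
    using mcms_le[of u 1] by simp
  finally have "L'' t \<le> 1 / 4" .

  note t(2)
  also have "L'' t * h\<^sup>2 / 2 \<le> (1 / 4) * h\<^sup>2 / 2"
    using \<open>L'' t \<le> 1 / 4\<close> by (intro mult_right_mono divide_right_mono) auto
  finally show "L h \<le> h\<^sup>2 / 8" by simp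
qed (auto simp: L_def)


lemma cosh_le_exp_sq: "cosh (x::real) \<le> exp (x^2/2)"
proof -
  have main: "cosh y \<le> exp (y^2/2)" if y: "y \<ge> 0" for y :: real
  proof -
    have "-(2*y) * (1/2) + ln (1 + (1/2) * (exp (2*y) - 1)) \<le> (2*y)^2/8"
      using hoeff_aux[of "2*y" "1/2"] y by simp
    moreover have "1 + (1/2) * (exp (2*y) - 1) = exp y * cosh y"
      by (simp add: cosh_def field_simps exp_add[symmetric])
    moreover have "ln (exp y * cosh y) = y + ln (cosh y)"
      by (simp add: ln_mult cosh_real_pos)
    ultimately have "ln (cosh y) \<le> y^2/2" by (simp add: power2_eq_square)
    then show ?thesis by (metis cosh_real_pos exp_le_cancel_iff exp_ln)
  qed
  show ?thesis using main[of "\<bar>x\<bar>"] by (simp add: cosh_real_abs)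
qed

lemma powexp: assumes "0 \<le> y" "0 < q" shows "y ^ q \<le> real q ^ q * exp y"
proof -
  have "(y / q) ^ q \<le> (1 + y / q) ^ q"
    using assms by (intro power_mono) auto
  also have "\<dots> \<le> exp (y / q) ^ q"
    using assms by (intro power_mono) (auto simp: exp_ge_add_one_self)
  also have "\<dots> = exp y"
    using assms by (simp add: exp_of_nat_mult[symmetric])
  finally have "(y / q) ^ q \<le> exp y" .
  then have "real q ^ q * (y / q) ^ q \<le> real q ^ q * exp y" by (intro mult_left_mono) auto
  then show ?thesis using assms by (simp add: power_divide)
qed

lemma mgf_bound:
  assumes "finite S"
  shows "(\<integral>\<^sup>+t. indicator {0..<1} t * ennreal (exp (\<Sum>n\<in>S. v n * rademacher n t)) \<partial>lborel)
          \<le> ennreal (exp ((\<Sum>n\<in>S. (v n)^2) / 2))"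
proof -
  have "(\<Prod>n\<in>S. cosh (v n)) \<le> (\<Prod>n\<in>S. exp ((v n)^2/2))"
    by (intro prod_mono) (auto simp: cosh_le_exp_sq cosh_real_pos less_imp_le)
  also have "\<dots> = exp ((\<Sum>n\<in>S. (v n)^2) / 2)"
    using assms by (simp add: exp_sum sum_divide_distrib)
  finally show ?thesis using mgf[OF assms, of v] order_trans ennreal_leI by blast
qed

lemma real_moment:
  assumes S: "finite S" and p: "0 < p"
  shows "(\<integral>\<^sup>+t. indicator {0..<1} t * ennreal ((\<Sum>n\<in>S. u n * rademacher n t) ^ (2*p)) \<partial>lborel)
     \<le> ennreal (2 * (2 * exp 1 * p * (\<Sum>n\<in>S. (u n)^2)) ^ p)"
proof (cases "(\<Sum>n\<in>S. (u n)^2) = 0")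
  case True
  then have "\<forall>n\<in>S. (u n)^2 = 0" using S by (subst (asm) sum_nonneg_eq_0_iff) auto
  then have "(\<Sum>n\<in>S. u n * rademacher n t) = 0" for t by simp
  moreover have "(0::real) ^ (2*p) = 0" using p by simp
  ultimately show ?thesis using p True by (simp add: power_0_left)
next
  case False
  define \<sigma> where "\<sigma> = (\<Sum>n\<in>S. (u n)^2)"
  have \<sigma>: "\<sigma> > 0" using False unfolding \<sigma>_def by (metis order_le_neq_trans sum_nonneg zero_le_power2)
  define l where "l = sqrt (2 * p / \<sigma>)"
  have l: "l > 0" "l^2 = 2*p/\<sigma>" using \<sigma> p by (auto simp: l_def)
  define c where "c = real (2*p) ^ (2*p) / l ^ (2*p)"
  have c0: "c \<ge> 0" using l by (simp add: c_def)
  define Y where "Y t = (\<Sum>n\<in>S. u n * rademacher n t)" for t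
  have pw: "(Y t) ^ (2*p) \<le> c * (exp (\<Sum>n\<in>S. (l * u n) * rademacher n t) + exp (\<Sum>n\<in>S. (- l * u n) * rademacher n t))" for t
  proof -
    have e1: "(\<Sum>n\<in>S. (l * u n) * rademacher n t) = l * Y t" unfolding Y_def by (simp add: sum_distrib_left mult.assoc)
    have e2: "(\<Sum>n\<in>S. (- l * u n) * rademacher n t) = - (l * Y t)" unfolding Y_def by (simp add: sum_distrib_left mult.assoc sum_negf)
    have "(l * \<bar>Y t\<bar>) ^ (2*p) \<le> real (2*p) ^ (2*p) * exp (l * \<bar>Y t\<bar>)"
      using l p by (intro powexp) auto
    also have "exp (l * \<bar>Y t\<bar>) \<le> exp (l * Y t) + exp (- (l * Y t))"
      using l by (cases "Y t \<ge> 0") (auto simp: abs_if add_increasing add_increasing2)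
    finally have "(l * \<bar>Y t\<bar>) ^ (2*p) \<le> real (2*p) ^ (2*p) * (exp (l * Y t) + exp (- (l * Y t)))"
      by (simp add: mult_left_mono)
    moreover have "(Y t) ^ (2*p) = (l * \<bar>Y t\<bar>) ^ (2*p) / l ^ (2*p)"
      using l by (simp add: power_mult_distrib power_even_abs)
    ultimately show ?thesis unfolding e1 e2 c_def using l
      by (simp add: divide_right_mono)
  qed
  have "(\<integral>\<^sup>+t. indicator {0..<1} t * ennreal ((Y t) ^ (2*p)) \<partial>lborel)
     \<le> (\<integral>\<^sup>+t. ennreal c * (indicator {0..<1} t * ennreal (exp (\<Sum>n\<in>S. (l * u n) * rademacher n t)) + indicator {0..<1} t * ennreal (exp (\<Sum>n\<in>S. (- l * u n) * rademacher n t))) \<partial>lborel)"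
  proof (intro nn_integral_mono)
    fix t
    have "ennreal ((Y t) ^ (2*p)) \<le> ennreal (c * (exp (\<Sum>n\<in>S. (l * u n) * rademacher n t) + exp (\<Sum>n\<in>S. (- l * u n) * rademacher n t)))"
      using pw by (rule ennreal_leI)
    also have "\<dots> = ennreal c * (ennreal (exp (\<Sum>n\<in>S. (l * u n) * rademacher n t)) + ennreal (exp (\<Sum>n\<in>S. (- l * u n) * rademacher n t)))"
      using c0 by (simp add: ennreal_mult ennreal_plus)
    finally show "indicator {0..<1} t * ennreal ((Y t) ^ (2*p)) \<le> ennreal c * (indicator {0..<1} t * ennreal (exp (\<Sum>n\<in>S. (l * u n) * rademacher n t)) + indicator {0..<1} t * ennreal (exp (\<Sum>n\<in>S. (- l * u n) * rademacher n t)))"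
      by (auto simp: indicator_def)
  qed
  also have "\<dots> = ennreal c * ((\<integral>\<^sup>+t. indicator {0..<1} t * ennreal (exp (\<Sum>n\<in>S. (l * u n) * rademacher n t)) \<partial>lborel) + (\<integral>\<^sup>+t. indicator {0..<1} t * ennreal (exp (\<Sum>n\<in>S. (- l * u n) * rademacher n t)) \<partial>lborel))"
    by (subst nn_integral_cmult) (auto simp: nn_integral_add)
  also have "\<dots> \<le> ennreal c * (ennreal (exp ((\<Sum>n\<in>S. (l * u n)^2) / 2)) + ennreal (exp ((\<Sum>n\<in>S. (- l * u n)^2) / 2)))"
    by (intro mult_left_mono add_mono mgf_bound S) auto
  also have "(\<Sum>n\<in>S. (l * u n)^2) = l^2 * \<sigma>" unfolding \<sigma>_def by (simp add: power_mult_distrib sum_distrib_left)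
  also have "(\<Sum>n\<in>S. (- l * u n)^2) = l^2 * \<sigma>" unfolding \<sigma>_def by (simp add: power_mult_distrib sum_distrib_left)
  also have "l^2 * \<sigma> / 2 = p" using l \<sigma> by simp
  also have "ennreal c * (ennreal (exp p) + ennreal (exp p)) = ennreal (2 * (c * exp p))"
    using c0 by (simp add: ennreal_mult ennreal_plus[symmetric] mult_2[symmetric] mult_ac)
  also have "c = (2 * p * \<sigma>) ^ p"
  proof -
    have "l ^ (2*p) = (2*p/\<sigma>)^p" by (simp add: power_mult l(2))
    moreover have "real (2*p) ^ (2*p) = ((2*real p)^2)^p" by (simp add: power_mult)
    ultimately have "c = ((2*real p)^2)^p / (2*p/\<sigma>)^p" unfolding c_def by simp
    also have "\<dots> = ((2*real p)^2 / (2*p/\<sigma>))^p" by (rule power_divide[symmetric])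
    also have "(2*real p)^2 / (2*p/\<sigma>) = 2*p*\<sigma>" using \<sigma> p by (simp add: field_simps power2_eq_square)
    finally show ?thesis .
  qed
  also have "exp (real p) = exp 1 ^ p" by (simp add: exp_of_nat_mult[symmetric])
  finally show ?thesis unfolding Y_def \<sigma>_def by (simp add: power_mult_distrib mult_ac)
qed


lemma pow_sum_le: assumes "0 \<le> a" "0 \<le> (b::real)" shows "(a + b)^p \<le> 2^p * (a^p + b^p)"
proof -
  have "(a + b)^p \<le> (2 * max a b)^p" using assms by (intro power_mono) auto
  also have "\<dots> = 2^p * (max a b)^p" by (simp add: power_mult_distrib)
  also have "(max a b)^p \<le> a^p + b^p" using assms by (auto simp: max_def)
  finally show ?thesis by (simp add: mult_left_mono)
qed

lemma cmoment:
  assumes S: "finite S" and p: "0 < p"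
  shows "(\<integral>\<^sup>+t. indicator {0..<1} t * ennreal (cmod (\<Sum>n\<in>S. of_real (rademacher n t) * c n) ^ (2*p)) \<partial>lborel)
     \<le> ennreal (4 * (4 * exp 1 * p * (\<Sum>n\<in>S. (cmod (c n))^2)) ^ p)"
proof -
  define \<sigma> where "\<sigma> = (\<Sum>n\<in>S. (cmod (c n))^2)"
  define \<sigma>R where "\<sigma>R = (\<Sum>n\<in>S. (Re (c n))^2)"
  define \<sigma>I where "\<sigma>I = (\<Sum>n\<in>S. (Im (c n))^2)"
  have sR: "0 \<le> \<sigma>R" "\<sigma>R \<le> \<sigma>" unfolding \<sigma>R_def \<sigma>_def
    by (auto intro!: sum_mono sum_nonneg simp: cmod_power2)
  have sI: "0 \<le> \<sigma>I" "\<sigma>I \<le> \<sigma>" unfolding \<sigma>I_def \<sigma>_def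
    by (auto intro!: sum_mono sum_nonneg simp: cmod_power2)
  define R where "R t = (\<Sum>n\<in>S. Re (c n) * rademacher n t)" for t
  define I where "I t = (\<Sum>n\<in>S. Im (c n) * rademacher n t)" for t
  have pw: "cmod (\<Sum>n\<in>S. of_real (rademacher n t) * c n) ^ (2*p) \<le> 2^p * ((R t)^(2*p) + (I t)^(2*p))" for t
  proof -
    let ?X = "(\<Sum>n\<in>S. of_real (rademacher n t) * c n)"
    have "Re ?X = R t" "Im ?X = I t" unfolding R_def I_def by (auto simp: Re_sum Im_sum mult.commute)
    then have "cmod ?X ^ 2 = (R t)^2 + (I t)^2" by (simp add: cmod_power2)
    then have "cmod ?X ^ (2*p) = ((R t)^2 + (I t)^2)^p" by (simp add: power_mult)
    also have "\<dots> \<le> 2^p * (((R t)^2)^p + ((I t)^2)^p)" by (rule pow_sum_le) auto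
    finally show ?thesis by (simp add: power_mult)
  qed
  have "(\<integral>\<^sup>+t. indicator {0..<1} t * ennreal (cmod (\<Sum>n\<in>S. of_real (rademacher n t) * c n) ^ (2*p)) \<partial>lborel)
      \<le> (\<integral>\<^sup>+t. ennreal (2^p) * (indicator {0..<1} t * ennreal ((R t)^(2*p)) + indicator {0..<1} t * ennreal ((I t)^(2*p))) \<partial>lborel)"
  proof (intro nn_integral_mono)
    fix t
    have "ennreal (cmod (\<Sum>n\<in>S. of_real (rademacher n t) * c n) ^ (2*p)) \<le> ennreal (2^p * ((R t)^(2*p) + (I t)^(2*p)))"
      using pw by (rule ennreal_leI)
    also have "\<dots> = ennreal (2^p) * (ennreal ((R t)^(2*p)) + ennreal ((I t)^(2*p)))"
      by (simp add: ennreal_mult ennreal_plus power_mult)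
    finally show "indicator {0..<1} t * ennreal (cmod (\<Sum>n\<in>S. of_real (rademacher n t) * c n) ^ (2*p)) \<le> ennreal (2^p) * (indicator {0..<1} t * ennreal ((R t)^(2*p)) + indicator {0..<1} t * ennreal ((I t)^(2*p)))"
      by (auto simp: indicator_def)
  qed
  also have "\<dots> = ennreal (2^p) * ((\<integral>\<^sup>+t. indicator {0..<1} t * ennreal ((R t)^(2*p)) \<partial>lborel) + (\<integral>\<^sup>+t. indicator {0..<1} t * ennreal ((I t)^(2*p)) \<partial>lborel))"
    unfolding R_def I_def by (subst nn_integral_cmult) (auto simp: nn_integral_add)
  also have "\<dots> \<le> ennreal (2^p) * (ennreal (2 * (2 * exp 1 * p * \<sigma>R) ^ p) + ennreal (2 * (2 * exp 1 * p * \<sigma>I) ^ p))"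
    unfolding R_def I_def \<sigma>R_def \<sigma>I_def by (intro mult_left_mono add_mono real_moment S p) auto
  also have "\<dots> \<le> ennreal (2^p) * (ennreal (2 * (2 * exp 1 * p * \<sigma>) ^ p) + ennreal (2 * (2 * exp 1 * p * \<sigma>) ^ p))"
    using sR sI by (intro mult_left_mono add_mono ennreal_leI mult_left_mono power_mono) auto
  also have "\<dots> = ennreal (4 * (4 * exp 1 * p * \<sigma>) ^ p)"
  proof -
    have "0 \<le> \<sigma>" using sR by simp
    then have A0: "0 \<le> 2 * (2 * exp 1 * p * \<sigma>) ^ p" by simp
    have "ennreal (2^p) * (ennreal (2 * (2 * exp 1 * p * \<sigma>) ^ p) + ennreal (2 * (2 * exp 1 * p * \<sigma>) ^ p))
       = ennreal (2^p) * ennreal (2 * (2 * exp 1 * p * \<sigma>) ^ p + 2 * (2 * exp 1 * p * \<sigma>) ^ p)"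
      using A0 by (simp only: ennreal_plus)
    also have "\<dots> = ennreal (2^p * (2 * (2 * exp 1 * p * \<sigma>) ^ p + 2 * (2 * exp 1 * p * \<sigma>) ^ p))"
      using A0 by (intro ennreal_mult[symmetric]) auto
    also have "2^p * (2 * (2 * exp 1 * p * \<sigma>) ^ p + 2 * (2 * exp 1 * p * \<sigma>) ^ p) = 4 * (4 * exp 1 * p * \<sigma>) ^ p"
    proof -
      have "(4::real)^p = 2^p * 2^p" by (simp add: power_mult_distrib[symmetric])
      then show ?thesis by (simp add: power_mult_distrib)
    qed
    finally show ?thesis .
  qed
  finally show ?thesis unfolding \<sigma>_def .
qed


definition cc :: "(nat \<Rightarrow> complex) \<Rightarrow> nat \<Rightarrow> complex" where
  "cc a n = of_nat (Suc n) * a (Suc n)"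

definition Dser :: "(nat \<Rightarrow> complex) \<Rightarrow> real \<Rightarrow> complex \<Rightarrow> complex" where
  "Dser a t z = (\<Sum>n. complex_of_real (rademacher (Suc n) t) * cc a n * z ^ n)"

lemma summable_bounded_geom:
  fixes f :: "nat \<Rightarrow> complex"
  assumes "\<And>n. norm (f n) \<le> B" "norm w < 1"
  shows "summable (\<lambda>n. f n * w ^ n)"
proof (rule summable_comparison_test')
  show "summable (\<lambda>n. B * norm w ^ n)" using assms by (intro summable_mult summable_geometric) auto
  show "norm (f n * w ^ n) \<le> B * norm w ^ n" for n
    using assms by (simp add: norm_mult norm_power mult_right_mono)
qed

lemma deriv_rad:
  assumes B: "\<And>n. norm (a (Suc n)) \<le> B" and z: "norm z < 1"
  shows "deriv (rad_series a t) z = Dser a t z"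
proof -
  define b where "b m = (if m = 0 then 0 else complex_of_real (rademacher m t) * a m)" for m
  have bB: "norm (b m) \<le> max B 0" for m
  proof (cases m)
    case (Suc k) then show ?thesis using B[of k] rademacher_abs[of m t]
      by (auto simp: b_def norm_mult intro: order_trans[OF mult_left_le_one_le] le_max_iff_disj)
  qed (auto simp: b_def)
  have sm: "summable (\<lambda>m. b m * w ^ m)" if "norm w < 1" for w
    using summable_bounded_geom[OF bB that] .
  have eq: "rad_series a t w = (\<Sum>m. b m * w ^ m)" if "w \<in> ball 0 1" for w
  proof -
    have "(\<Sum>n. b (Suc n) * w ^ Suc n) = (\<Sum>m. b m * w ^ m) - b 0 * w ^ 0"
      using suminf_split_head[OF sm] that by simp
    then show ?thesis unfolding rad_series_def by (simp add: b_def mult.assoc)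
  qed
  have d: "((\<lambda>w. \<Sum>m. b m * w ^ m) has_field_derivative (\<Sum>n. diffs b n * z ^ n)) (at z)"
    by (rule termdiffs_strong'[of 1]) (use sm z in auto)
  have "(rad_series a t has_field_derivative (\<Sum>n. diffs b n * z ^ n)) (at z)"
    by (rule has_field_derivative_transform_within_open[OF d, of "ball 0 1"]) (use z eq in auto)
  then have "deriv (rad_series a t) z = (\<Sum>n. diffs b n * z ^ n)" by (rule DERIV_imp_deriv)
  also have "\<dots> = Dser a t z" unfolding Dser_def diffs_def b_def cc_def by (simp add: mult_ac)
  finally show ?thesis .
qed

lemma Minf_sq_le:
  assumes r: "0 \<le> r" and Q: "\<And>z. norm z = r \<Longrightarrow> (norm (g z))^2 \<le> Q"
  shows "(Minf r g)^2 \<le> Q"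
proof -
  have ne: "complex_of_real r \<in> {z. norm z = r}" using r by simp
  have nr: "norm (complex_of_real r) = r" using r by simp
  have Q0: "0 \<le> Q" using Q[OF nr] by (meson order_trans zero_le_power2)
  have le: "norm (g z) \<le> sqrt Q" if "norm z = r" for z
    using Q[OF that] by (simp add: real_le_rsqrt)
  have "Minf r g \<le> sqrt Q" unfolding Minf_def
    by (rule cSup_least) (use nr le in \<open>auto intro!: exI[of _ "complex_of_real r"]\<close>)
  moreover have "0 \<le> Minf r g" unfolding Minf_def
  proof -
    have "norm (g (complex_of_real r)) \<le> Sup ((\<lambda>z. norm (g z)) ` {z. norm z = r})"
      by (rule cSup_upper) (use ne le in \<open>auto intro!: bdd_aboveI[where M="sqrt Q"]\<close>)
    then show "0 \<le> Sup ((\<lambda>z. norm (g z)) ` {z. norm z = r})" by (meson norm_ge_zero order_trans)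
  qed
  ultimately have "(Minf r g)^2 \<le> (sqrt Q)^2" by (intro power_mono) auto
  then show ?thesis using Q0 by simp
qed

definition om :: "nat \<Rightarrow> nat \<Rightarrow> complex" where
  "om M j = exp (2 * pi * \<i> * of_nat j / of_nat M)"

lemma norm_om[simp]: "norm (om M j) = 1"
proof -
  have "2 * pi * \<i> * of_nat j / of_nat M = \<i> * complex_of_real (2 * pi * j / M)" by simp
  then show ?thesis unfolding om_def by (simp only: norm_exp_i_times)
qed

lemma exp_i_diff: "cmod (exp (\<i> * complex_of_real s) - exp (\<i> * complex_of_real u)) \<le> \<bar>s - u\<bar>"
proof -
  have "exp (\<i> * complex_of_real s) - exp (\<i> * complex_of_real u) = exp (\<i> * complex_of_real u) * (exp (\<i> * complex_of_real (s - u)) - 1)"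
    by (simp add: algebra_simps exp_add[symmetric])
  then have "cmod (exp (\<i> * complex_of_real s) - exp (\<i> * complex_of_real u)) = 2 * \<bar>sin ((s - u) / 2)\<bar>"
    using dist_exp_i_1[of "s - u"] by (simp add: norm_mult)
  also have "\<dots> \<le> 2 * \<bar>(s - u) / 2\<bar>" using abs_sin_x_le_abs_x[of "(s - u) / 2"] by linarith
  finally show ?thesis by simp
qed

lemma grid:
  assumes r: "0 \<le> r" and M: "0 < M" and z: "norm z = r"
  shows "\<exists>j<M. norm (z - of_real r * om M j) \<le> 2 * pi * r / M"
proof -
  define \<theta> where "\<theta> = Arg2pi z"
  have th: "0 \<le> \<theta>" "\<theta> < 2 * pi" unfolding \<theta>_def by (auto simp: Arg2pi_ge_0 Arg2pi_lt_2pi)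
  have zeq: "z = of_real r * exp (\<i> * of_real \<theta>)" using Arg2pi_eq[of z] z unfolding \<theta>_def by simp
  define j where "j = nat (floor (\<theta> * M / (2 * pi)))"
  have fl: "floor (\<theta> * M / (2 * pi)) \<ge> 0" using th M by simp
  have j1: "real j \<le> \<theta> * M / (2 * pi)" unfolding j_def using fl by linarith
  have j2: "\<theta> * M / (2 * pi) < real j + 1" unfolding j_def using fl by linarith
  have "\<theta> * M / (2 * pi) < M" using th M by (simp add: field_simps)
  then have jM: "j < M" using j1 fl unfolding j_def by linarith
  define \<phi> where "\<phi> = 2 * pi * j / M"
  have ph: "\<phi> \<le> \<theta>" "\<theta> < \<phi> + 2 * pi / M" using j1 j2 M unfolding \<phi>_def by (auto simp: field_simps)
  have omeq: "om M j = exp (\<i> * of_real \<phi>)" unfolding om_def \<phi>_def by (simp add: mult_ac)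
  have "norm (z - of_real r * om M j) = r * cmod (exp (\<i> * complex_of_real \<theta>) - exp (\<i> * complex_of_real \<phi>))"
    unfolding zeq omeq using r by (simp add: norm_mult right_diff_distrib[symmetric])
  also have "\<dots> \<le> r * \<bar>\<theta> - \<phi>\<bar>" using r exp_i_diff by (intro mult_left_mono) auto
  also have "\<dots> \<le> r * (2 * pi / M)" using ph r by (intro mult_left_mono) auto
  finally show ?thesis using jM by (intro exI[of _ j]) (auto simp: mult_ac)
qed


definition P :: "(nat \<Rightarrow> complex) \<Rightarrow> nat \<Rightarrow> nat \<Rightarrow> real \<Rightarrow> nat \<Rightarrow> real \<Rightarrow> complex" where
  "P a N M r j t = (\<Sum>n<N. complex_of_real (rademacher (Suc n) t) * cc a n * (complex_of_real r * om M j) ^ n)"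

lemma tail_cond:
  assumes r: "0 \<le> r" "r < 1" and k: "1/2^(Suc k) \<le> 1 - r" and n: "16^(Suc k) \<le> n"
  shows "real (Suc n) * r^n \<le> 2048 / (real (Suc n))^2"
proof -
  define x where "x = 1 - r"
  have x: "0 < x" "1/2^(Suc k) \<le> x" using r k by (auto simp: x_def)
  have n1: "1 \<le> n" using n by (metis le_trans one_le_numeral one_le_power)
  have "r \<le> exp (-x)" using exp_ge_add_one_self[of "-x"] by (simp add: x_def)
  then have "r^n \<le> exp (-x)^n" using r by (intro power_mono) auto
  also have "\<dots> = exp (- (n * x))" by (simp add: exp_of_nat_mult[symmetric])
  finally have rn: "r^n \<le> exp (- (n * x))" .
  have "(n * x)^4 \<le> real 4 ^ 4 * exp (n * x)" using x n1 by (intro powexp) auto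
  then have e: "exp (- (n * x)) \<le> 256 / (n * x)^4" using x n1
    by (simp add: exp_minus field_simps)
  have s3: "(real (Suc n))^3 \<le> 8 * (real n)^3"
  proof -
    have "real (Suc n) \<le> 2 * real n" using n1 by simp
    then have "(real (Suc n))^3 \<le> (2 * real n)^3" by (intro power_mono) auto
    then show ?thesis by (simp add: power_mult_distrib)
  qed
  have nx: "1 \<le> real n * x^4"
  proof -
    have "(1/2^(Suc k))^4 \<le> x^4" using x by (intro power_mono) auto
    moreover have "real (16^(Suc k)) \<le> real n" using n by linarith
    ultimately have "real (16^(Suc k)) * (1/2^(Suc k))^4 \<le> real n * x^4"
      by (intro mult_mono) auto
    moreover have "real (16^(Suc k)) * (1/2^(Suc k))^4 = 1"
    proof -
      have "(16::real)^(Suc k) = (2^4)^(Suc k)" by simp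
      also have "\<dots> = (2^(Suc k))^4" by (simp only: power_mult[symmetric] mult.commute)
      finally have "(16::real)^(Suc k) = (2^(Suc k))^4" .
      then show ?thesis by (simp add: power_divide)
    qed
    ultimately show ?thesis by simp
  qed
  have "(real (Suc n))^3 * r^n \<le> 8 * (real n)^3 * (256 / (n * x)^4)"
    using s3 rn e r by (intro mult_mono) auto
  also have "\<dots> = 2048 / (real n * x^4)" using x n1 by (simp add: field_simps power_mult_distrib power3_eq_cube power4_eq_xxxx)
  also have "\<dots> \<le> 2048" using nx by (simp add: divide_le_eq)
  finally have "(real (Suc n))^3 * r^n \<le> 2048" .
  then have "real (Suc n) * r^n * (real (Suc n))^2 \<le> 2048"
    by (simp add: power2_eq_square power3_eq_cube mult_ac)
  then show ?thesis by (subst pos_le_divide_eq) auto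
qed

lemma cc_bound: assumes "\<And>n. norm (a (Suc n)) \<le> B" shows "norm (cc a n) \<le> real (Suc n) * B"
  unfolding cc_def norm_mult norm_of_nat using assms[of n] by (intro mult_left_mono) auto

lemma D_bound:
  assumes B: "\<And>n. norm (a (Suc n)) \<le> B" and r: "0 \<le> r" "r < 1" and N: "0 < N"
    and tl: "\<And>n. N \<le> n \<Longrightarrow> real (Suc n) * r^n \<le> 2048 / (real (Suc n))^2" and z: "norm z = r"
  shows "\<exists>j < N^3. norm (Dser a t z) \<le> norm (P a N (N^3) r j t) + B * (2*pi + 2048 * (pi^2/6))"
proof -
  have B0: "0 \<le> B" using B[of 0] by (meson norm_ge_zero order_trans)
  have ccb: "norm (cc a n) \<le> real (Suc n) * B" for n by (rule cc_bound) (rule B)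
  define f where "f n = complex_of_real (rademacher (Suc n) t) * cc a n * z^n" for n
  have fb: "norm (f n) \<le> real (Suc n) * B * r^n" for n
  proof -
    have "norm (f n) = \<bar>rademacher (Suc n) t\<bar> * norm (cc a n) * r^n" by (simp add: f_def norm_mult norm_power z)
    also have "\<dots> \<le> 1 * (real (Suc n) * B) * r^n"
      using rademacher_abs ccb r B0 by (intro mult_mono) auto
    finally show ?thesis by simp
  qed
  have fb2: "norm (f n) \<le> B * 2048 * (1 / real ((n + 1)^2))" if "N \<le> n" for n
  proof -
    have "norm (f n) \<le> B * (real (Suc n) * r^n)" using fb[of n] by (simp add: mult_ac)
    also have "\<dots> \<le> B * (2048 / (real (Suc n))^2)" using tl[OF that] B0 by (intro mult_left_mono) auto
    finally show ?thesis by simp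
  qed
  have sq: "summable (\<lambda>n. 1 / real ((n + 1)^2))" using inverse_squares_sums by (rule sums_summable)
  have sq2: "summable (\<lambda>n. B * 2048 * (1 / real ((n + 1)^2)))" using sq by (rule summable_mult)
  have sf: "summable f"
    by (rule summable_comparison_test'[of "\<lambda>n. B * 2048 * (1 / real ((n + 1)^2))" N]) (use fb2 sq2 in simp_all)
  have split: "Dser a t z = (\<Sum>n. f (n + N)) + (\<Sum>n<N. f n)"
    unfolding Dser_def f_def[symmetric] by (rule suminf_split_initial_segment[OF sf])
  have tailb: "norm (\<Sum>n. f (n + N)) \<le> B * 2048 * (pi^2/6)"
  proof -
    have "norm (\<Sum>n. f (n + N)) \<le> (\<Sum>n. B * 2048 * (1 / real ((n + 1)^2)))"
    proof (rule norm_suminf_le)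
      fix n
      have "norm (f (n + N)) \<le> B * 2048 * (1 / real ((n + N + 1)^2))" using fb2[of "n + N"] by simp
      also have "\<dots> \<le> B * 2048 * (1 / real ((n + 1)^2))"
        using B0 by (intro mult_left_mono divide_left_mono) (auto simp: power_mono)
      finally show "norm (f (n + N)) \<le> B * 2048 * (1 / real ((n + 1)^2))" .
    qed (rule sq2)
    also have "\<dots> = B * 2048 * (pi^2/6)"
      unfolding suminf_mult[OF sq] sums_unique[OF inverse_squares_sums, symmetric] ..
    finally show ?thesis .
  qed
  obtain j where j: "j < N^3" and zj: "norm (z - of_real r * om (N^3) j) \<le> 2 * pi * r / (N^3)"
    using grid[OF r(1) _ z, of "N^3"] N by auto
  define w where "w = of_real r * om (N^3) j"
  have nw: "norm w = r" using r by (simp add: w_def norm_mult)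
  have headb: "norm ((\<Sum>n<N. f n) - P a N (N^3) r j t) \<le> 2 * pi * B"
  proof -
    have "norm ((\<Sum>n<N. f n) - P a N (N^3) r j t) = norm (\<Sum>n<N. complex_of_real (rademacher (Suc n) t) * cc a n * (z^n - w^n))"
      unfolding P_def f_def w_def[symmetric] by (simp add: sum_subtractf[symmetric] algebra_simps)
    also have "\<dots> \<le> (\<Sum>n<N. norm (complex_of_real (rademacher (Suc n) t) * cc a n * (z^n - w^n)))"
      by (rule norm_sum)
    also have "\<dots> \<le> (\<Sum>n<N. real N * B * (real N * norm (z - w)))"
    proof (rule sum_mono)
      fix n assume n: "n \<in> {..<N}"
      have "norm (complex_of_real (rademacher (Suc n) t) * cc a n * (z^n - w^n)) = \<bar>rademacher (Suc n) t\<bar> * norm (cc a n) * norm (z^n - w^n)"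
        by (simp add: norm_mult)
      also have "\<dots> \<le> 1 * (real N * B) * (real N * norm (z - w))"
      proof (intro mult_mono)
        show "norm (cc a n) \<le> real N * B" using ccb[of n] n B0
          by (meson lessThan_iff less_eq_Suc_le mult_right_mono of_nat_le_iff order_trans)
        have "norm (z^n - w^n) \<le> real n * norm (z - w)" using z nw r by (intro norm_power_diff) auto
        also have "\<dots> \<le> real N * norm (z - w)" using n by (intro mult_right_mono) auto
        finally show "norm (z^n - w^n) \<le> real N * norm (z - w)" .
      qed (auto simp: rademacher_abs B0)
      finally show "norm (complex_of_real (rademacher (Suc n) t) * cc a n * (z^n - w^n)) \<le> real N * B * (real N * norm (z - w))" by simp
    qed
    also have "\<dots> = real N^3 * B * norm (z - w)" by (simp add: power3_eq_cube mult_ac)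
    also have "\<dots> \<le> real N^3 * B * (2 * pi * r / (N^3))" using zj B0 unfolding w_def by (intro mult_left_mono) auto
    also have "\<dots> = 2 * pi * B * r" using N by simp
    also have "\<dots> \<le> 2 * pi * B" using B0 r by (simp add: mult_left_le)
    finally show ?thesis .
  qed
  have "norm (Dser a t z) \<le> norm (\<Sum>n. f (n + N)) + norm ((\<Sum>n<N. f n) - P a N (N^3) r j t) + norm (P a N (N^3) r j t)"
    unfolding split by (metis (no_types, lifting) add.assoc diff_add_cancel norm_triangle_ineq order_trans add_left_mono)
  also have "\<dots> \<le> B * 2048 * (pi^2/6) + 2 * pi * B + norm (P a N (N^3) r j t)"
    using tailb headb by simp
  finally show ?thesis using j by (intro exI[of _ j]) (auto simp: algebra_simps)
qed


definition Nk :: "nat \<Rightarrow> nat" where "Nk k = 16^(Suc k)"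
definition pk :: "nat \<Rightarrow> nat" where "pk k = 12*k + 13"
definition sig :: "(nat \<Rightarrow> complex) \<Rightarrow> nat \<Rightarrow> real \<Rightarrow> real" where
  "sig a k r = (\<Sum>n<Nk k. (cmod (cc a n))^2 * r^(2*n))"
definition sv :: "(nat \<Rightarrow> complex) \<Rightarrow> nat \<Rightarrow> real \<Rightarrow> real" where
  "sv a k r = 8 * exp 1 * real (pk k) * (sig a k r + 1)"
definition Lg :: "real \<Rightarrow> real" where "Lg r = ln (1/(1-r))"
definition C0 :: "real \<Rightarrow> real" where "C0 B = B * (2*pi + 2048*(pi^2/6))"
definition Gk :: "(nat \<Rightarrow> complex) \<Rightarrow> real \<Rightarrow> nat \<Rightarrow> real \<Rightarrow> real \<Rightarrow> real" where
  "Gk a B k r t = (1-r) * (Lg r)^2 * (2 * sv a k r + 2 * (C0 B)^2 +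
     2 * (\<Sum>j<(Nk k)^3. cmod (P a (Nk k) ((Nk k)^3) r j t) ^ (2 * pk k)) / (real (pk k) * sv a k r ^ (pk k - 1)))"
definition Ik :: "nat \<Rightarrow> real set" where "Ik k = {1 - 1/2^k ..< 1 - 1/2^(Suc k)}"

lemma sig_nonneg: "0 \<le> r \<Longrightarrow> 0 \<le> sig a k r"
  unfolding sig_def by (intro sum_nonneg) auto

lemma sv_pos: "0 \<le> r \<Longrightarrow> 0 < sv a k r"
  unfolding sv_def using sig_nonneg[of r a k] by (intro mult_pos_pos) (auto simp: pk_def)

lemma bern:
  fixes y s :: real
  assumes y: "0 \<le> y" and s: "0 < s" and p: "0 < p"
  shows "y \<le> s + y^p / (p * s^(p-1))"
proof -
  have "1 + real p * (y/s - 1) \<le> (1 + (y/s - 1))^p"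
    by (rule Bernoulli_inequality) (use y s in simp)
  then have b: "1 + real p * (y/s - 1) \<le> (y/s)^p" by simp
  have sp: "s^p = s * s^(p-1)" using p by (cases p) auto
  have e: "y^p / (p * s^(p-1)) = (s/p) * (y/s)^p"
  proof -
    have "(s/p) * (y/s)^p = (s/p) * (y^p / (s * s^(p-1)))" by (simp only: power_divide sp)
    also have "\<dots> = y^p / (p * s^(p-1))" using s p by simp
    finally show ?thesis by simp
  qed
  have "(s/p) * (1 + real p * (y/s - 1)) \<le> (s/p) * (y/s)^p"
    using b s p by (intro mult_left_mono) auto
  moreover have "(s/p) * (1 + real p * (y/s - 1)) = s/p + y - s" using s p by (simp add: field_simps)
  moreover have "s/p \<ge> 0" using s by simp
  ultimately show ?thesis using e by linarith
qed

lemma Ik_props: assumes "r \<in> Ik k" shows "r < 1" "1/2^(Suc k) \<le> 1 - r" "1 - r \<le> 1/2^k"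
  using assms unfolding Ik_def by auto

lemma PW:
  assumes B: "\<And>n. norm (a (Suc n)) \<le> B" and rk: "r \<in> Ik k" and r0: "0 < r"
  shows "(1-r) * (Lg r)^2 * (Minf r (deriv (rad_series a t)))^2 \<le> Gk a B k r t"
proof -
  have r1: "r < 1" and rk2: "1/2^(Suc k) \<le> 1 - r" using Ik_props[OF rk] by auto
  define N where "N = Nk k"
  define p where "p = pk k"
  define s where "s = sv a k r"
  have s: "0 < s" unfolding s_def using r0 by (intro sv_pos) auto
  have p: "0 < p" unfolding p_def pk_def by simp
  have N: "0 < N" unfolding N_def Nk_def by simp
  define S where "S = (\<Sum>j<N^3. cmod (P a N (N^3) r j t) ^ (2 * p))"
  define Q where "Q = 2 * s + 2 * (C0 B)^2 + 2 * S / (real p * s ^ (p - 1))"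
  have tl: "\<And>n. N \<le> n \<Longrightarrow> real (Suc n) * r^n \<le> 2048 / (real (Suc n))^2"
    unfolding N_def Nk_def using r0 r1 rk2 by (intro tail_cond) auto
  have "(Minf r (deriv (rad_series a t)))^2 \<le> Q"
  proof (rule Minf_sq_le)
    show "0 \<le> r" using r0 by simp
    fix z :: complex assume z: "norm z = r"
    have dz: "deriv (rad_series a t) z = Dser a t z"
      using deriv_rad[where a=a and B=B and t=t and z=z] B z r1 by simp
    obtain j where j: "j < N^3" and jb: "norm (Dser a t z) \<le> norm (P a N (N^3) r j t) + C0 B"
      using D_bound[where a=a and B=B and r=r and N=N and t=t and z=z] B r1 N tl z r0 unfolding C0_def by auto
    define y where "y = (norm (P a N (N^3) r j t))^2"
    have "(norm (Dser a t z))^2 \<le> (norm (P a N (N^3) r j t) + C0 B)^2"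
      using jb by (intro power_mono) auto
    also have "\<dots> \<le> 2 * y + 2 * (C0 B)^2"
    proof -
      have "0 \<le> (norm (P a N (N^3) r j t) - C0 B)^2" by simp
      then show ?thesis unfolding y_def by (simp add: power2_eq_square algebra_simps)
    qed
    finally have d1: "(norm (Dser a t z))^2 \<le> 2 * y + 2 * (C0 B)^2" .
    have d2: "y \<le> s + y^p / (p * s^(p-1))" by (rule bern) (use s p in \<open>auto simp: y_def\<close>)
    have d3: "y^p \<le> S"
    proof -
      have "y^p = cmod (P a N (N^3) r j t) ^ (2 * p)" unfolding y_def by (simp add: power_mult)
      also have "\<dots> \<le> S" unfolding S_def using j by (intro member_le_sum) auto
      finally show ?thesis .
    qed
    have "y^p / (p * s^(p-1)) \<le> S / (p * s^(p-1))"
      using d3 s p by (intro divide_right_mono) auto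
    then have "y \<le> s + S / (p * s^(p-1))" using d2 by linarith
    then show "(norm (deriv (rad_series a t) z))^2 \<le> Q"
      unfolding dz Q_def using d1 by simp
  qed
  then have "(1-r) * (Lg r)^2 * (Minf r (deriv (rad_series a t)))^2 \<le> (1-r) * (Lg r)^2 * Q"
    using r1 by (intro mult_left_mono) auto
  also have "\<dots> = Gk a B k r t" unfolding Gk_def Q_def S_def N_def p_def s_def by simp
  finally show ?thesis .
qed


lemma cmoment':
  assumes p: "0 < p"
  shows "(\<integral>\<^sup>+t. indicator {0..<1::real} t * ennreal (cmod (\<Sum>n<N. of_real (rademacher (Suc n) t) * c n) ^ (2*p)) \<partial>lborel)
     \<le> ennreal (4 * (4 * exp 1 * real p * (\<Sum>n<N. (cmod (c n))^2)) ^ p)"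
proof -
  have inj: "inj_on Suc {..<N}" by simp
  have e1: "(\<Sum>m\<in>Suc ` {..<N}. of_real (rademacher m t) * c (m - 1)) = (\<Sum>n<N. of_real (rademacher (Suc n) t) * c n)" for t
    by (subst sum.reindex[OF inj]) simp
  have e2: "(\<Sum>m\<in>Suc ` {..<N}. (cmod (c (m - 1)))^2) = (\<Sum>n<N. (cmod (c n))^2)"
    by (subst sum.reindex[OF inj]) simp
  show ?thesis using cmoment[of "Suc ` {..<N}" p "\<lambda>m. c (m - 1)"] p unfolding e1 e2 by simp
qed

lemma Mk_eq: "real ((Nk k)^3) = 2^(pk k - 1)"
proof -
  have "(Nk k)^3 = 16^(Suc k * 3)" unfolding Nk_def by (simp only: power_mult)
  also have "(16::nat) = 2^4" by simp
  also have "((2::nat)^4)^(Suc k * 3) = 2^(4 * (Suc k * 3))" by (simp only: power_mult)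
  also have "4 * (Suc k * 3) = pk k - 1" unfolding pk_def by simp
  finally show ?thesis by simp
qed

lemma EX:
  assumes r: "0 \<le> r" "r < 1"
  shows "(\<integral>\<^sup>+t. indicator {0..<1::real} t * ennreal (Gk a B k r t) \<partial>lborel)
     \<le> ennreal ((1-r) * (Lg r)^2 * (2 * sv a k r + 2 * (C0 B)^2 + 32 * exp 1 * sig a k r))"
proof -
  define A where "A = (1-r) * (Lg r)^2"
  have A: "0 \<le> A" unfolding A_def using r by simp
  define p where "p = pk k"
  define s where "s = sv a k r"
  define \<sigma> where "\<sigma> = sig a k r"
  define N where "N = Nk k"
  define M where "M = N^3"
  have s: "0 < s" unfolding s_def using r by (intro sv_pos) auto
  have p: "0 < p" unfolding p_def pk_def by simp
  have \<sigma>: "0 \<le> \<sigma>" unfolding \<sigma>_def using r by (intro sig_nonneg) auto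
  define c where "c = 2 * A / (real p * s ^ (p - 1))"
  have c: "0 \<le> c" unfolding c_def using A s by simp
  define Y where "Y j t = cmod (P a N M r j t) ^ (2 * p)" for j t
  have G: "Gk a B k r t = A * (2 * s + 2 * (C0 B)^2) + c * (\<Sum>j<M. Y j t)" for t
    unfolding Gk_def A_def c_def Y_def p_def s_def N_def M_def by (simp add: algebra_simps)
  have mY: "(\<integral>\<^sup>+t. indicator {0..<1::real} t * ennreal (Y j t) \<partial>lborel) \<le> ennreal (4 * (4 * exp 1 * real p * \<sigma>) ^ p)" for j
  proof -
    have eqs: "(\<Sum>n<N. (cmod (cc a n * (complex_of_real r * om M j) ^ n))^2) = \<sigma>"
      unfolding \<sigma>_def sig_def N_def using r by (intro sum.cong) (auto simp: norm_mult norm_power power_mult_distrib power_mult[symmetric] mult.commute)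
    have "P a N M r j t = (\<Sum>n<N. of_real (rademacher (Suc n) t) * (cc a n * (complex_of_real r * om M j) ^ n))" for t
      unfolding P_def by (simp add: mult.assoc)
    then show ?thesis unfolding Y_def using cmoment'[OF p, where N=N and c="\<lambda>n. cc a n * (complex_of_real r * om M j) ^ n"] eqs by simp
  qed
  have "(\<integral>\<^sup>+t. indicator {0..<1::real} t * ennreal (Gk a B k r t) \<partial>lborel)
      = (\<integral>\<^sup>+t. ennreal (A * (2 * s + 2 * (C0 B)^2)) * indicator {0..<1::real} t + ennreal c * (\<Sum>j<M. indicator {0..<1::real} t * ennreal (Y j t)) \<partial>lborel)"
  proof (intro nn_integral_cong)
    fix t
    have "ennreal (Gk a B k r t) = ennreal (A * (2 * s + 2 * (C0 B)^2)) + ennreal c * (\<Sum>j<M. ennreal (Y j t))"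
    proof -
      have Y0: "0 \<le> (\<Sum>j<M. Y j t)" unfolding Y_def by (intro sum_nonneg) auto
      have X0: "0 \<le> A * (2 * s + 2 * (C0 B)^2)" using A s by simp
      have "ennreal (Gk a B k r t) = ennreal (A * (2 * s + 2 * (C0 B)^2)) + ennreal (c * (\<Sum>j<M. Y j t))"
        unfolding G using X0 Y0 c by (intro ennreal_plus) auto
      also have "ennreal (c * (\<Sum>j<M. Y j t)) = ennreal c * ennreal (\<Sum>j<M. Y j t)"
        using c Y0 by (rule ennreal_mult)
      also have "ennreal (\<Sum>j<M. Y j t) = (\<Sum>j<M. ennreal (Y j t))"
        unfolding Y_def by (rule sum_ennreal[symmetric]) auto
      finally show ?thesis .
    qed
    then show "indicator {0..<1::real} t * ennreal (Gk a B k r t) = ennreal (A * (2 * s + 2 * (C0 B)^2)) * indicator {0..<1::real} t + ennreal c * (\<Sum>j<M. indicator {0..<1::real} t * ennreal (Y j t))"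
      by (auto simp: indicator_def)
  qed
  also have "\<dots> = ennreal (A * (2 * s + 2 * (C0 B)^2)) * (\<integral>\<^sup>+t. indicator {0..<1::real} t \<partial>lborel) + ennreal c * (\<Sum>j<M. (\<integral>\<^sup>+t. indicator {0..<1::real} t * ennreal (Y j t) \<partial>lborel))"
  proof -
    have [measurable]: "(\<lambda>t. Y j t) \<in> borel_measurable lborel" for j unfolding Y_def P_def by measurable
    have "(\<integral>\<^sup>+t. ennreal (A * (2 * s + 2 * (C0 B)^2)) * indicator {0..<1::real} t + ennreal c * (\<Sum>j<M. indicator {0..<1::real} t * ennreal (Y j t)) \<partial>lborel)
      = (\<integral>\<^sup>+t. ennreal (A * (2 * s + 2 * (C0 B)^2)) * indicator {0..<1::real} t \<partial>lborel) + (\<integral>\<^sup>+t. ennreal c * (\<Sum>j<M. indicator {0..<1::real} t * ennreal (Y j t)) \<partial>lborel)"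
    proof -
      have m1: "(\<lambda>t. ennreal (A * (2 * s + 2 * (C0 B)^2)) * indicator {0..<1::real} t) \<in> borel_measurable lborel" by measurable
      have m2: "(\<lambda>t. ennreal c * (\<Sum>j<M. indicator {0..<1::real} t * ennreal (Y j t))) \<in> borel_measurable lborel" by measurable
      show ?thesis using nn_integral_add[OF m1 m2] by simp
    qed
    also have "(\<integral>\<^sup>+t. ennreal (A * (2 * s + 2 * (C0 B)^2)) * indicator {0..<1::real} t \<partial>lborel) = ennreal (A * (2 * s + 2 * (C0 B)^2)) * (\<integral>\<^sup>+t. indicator {0..<1::real} t \<partial>lborel)"
      by (rule nn_integral_cmult) auto
    also have "(\<integral>\<^sup>+t. ennreal c * (\<Sum>j<M. indicator {0..<1::real} t * ennreal (Y j t)) \<partial>lborel) = ennreal c * (\<integral>\<^sup>+t. (\<Sum>j<M. indicator {0..<1::real} t * ennreal (Y j t)) \<partial>lborel)"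
      by (rule nn_integral_cmult) auto
    also have "(\<integral>\<^sup>+t. (\<Sum>j<M. indicator {0..<1::real} t * ennreal (Y j t)) \<partial>lborel) = (\<Sum>j<M. (\<integral>\<^sup>+t. indicator {0..<1::real} t * ennreal (Y j t) \<partial>lborel))"
      by (rule nn_integral_sum) auto
    finally show ?thesis .
  qed
  also have "\<dots> \<le> ennreal (A * (2 * s + 2 * (C0 B)^2)) * 1 + ennreal c * (\<Sum>j<M. ennreal (4 * (4 * exp 1 * real p * \<sigma>) ^ p))"
    by (intro add_mono mult_left_mono sum_mono mY) auto
  also have "\<dots> = ennreal (A * (2 * s + 2 * (C0 B)^2) + c * (M * (4 * (4 * exp 1 * real p * \<sigma>) ^ p)))"
    using A s c \<sigma> by (simp add: ennreal_plus ennreal_mult ennreal_of_nat_eq_real_of_nat)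
  also have "\<dots> \<le> ennreal (A * (2 * s + 2 * (C0 B)^2 + 32 * exp 1 * \<sigma>))"
  proof (intro ennreal_leI)
    have key: "c * (M * (4 * (4 * exp 1 * real p * \<sigma>) ^ p)) \<le> A * (32 * exp 1 * \<sigma>)"
    proof -
      have q: "4 * exp 1 * real p * \<sigma> \<le> s / 2" unfolding s_def sv_def \<sigma>_def[symmetric] p_def[symmetric]
        using \<sigma> by (simp add: field_simps)
      have q0: "0 \<le> 4 * exp 1 * real p * \<sigma>" using \<sigma> by simp
      have "(4 * exp 1 * real p * \<sigma>) ^ p = (4 * exp 1 * real p * \<sigma>) * (4 * exp 1 * real p * \<sigma>) ^ (p - 1)"
        using p by (cases p) auto
      also have "\<dots> \<le> (4 * exp 1 * real p * \<sigma>) * (s / 2) ^ (p - 1)"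
        using q q0 by (intro mult_left_mono power_mono) auto
      finally have b1: "(4 * exp 1 * real p * \<sigma>) ^ p \<le> (4 * exp 1 * real p * \<sigma>) * (s^(p-1) / 2^(p-1))"
        by (simp add: power_divide)
      have Mr: "real M = 2^(p-1)" unfolding M_def N_def p_def by (rule Mk_eq)
      have "c * (M * (4 * (4 * exp 1 * real p * \<sigma>) ^ p)) \<le> c * (M * (4 * ((4 * exp 1 * real p * \<sigma>) * (s^(p-1) / 2^(p-1)))))"
        using b1 c by (intro mult_left_mono) auto
      also have "\<dots> = A * (32 * exp 1 * \<sigma>)"
        unfolding c_def Mr using s p by (simp add: field_simps)
      finally show ?thesis .
    qed
    then show "A * (2 * s + 2 * (C0 B)^2) + c * (M * (4 * (4 * exp 1 * real p * \<sigma>) ^ p)) \<le> A * (2 * s + 2 * (C0 B)^2 + 32 * exp 1 * \<sigma>)"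
      by (simp add: algebra_simps)
  qed
  finally show ?thesis unfolding A_def s_def \<sigma>_def by simp
qed


lemma ennreal_swap: "(\<Sum>k. \<Sum>n. f k n) = (\<Sum>n. \<Sum>k. (f k n :: ennreal))"
proof -
  have "(\<Sum>k. \<Sum>n. f k n) = (\<Sum>k. \<integral>\<^sup>+n. f k n \<partial>count_space UNIV)"
    by (simp add: nn_integral_count_space_nat)
  also have "\<dots> = (\<integral>\<^sup>+n. (\<Sum>k. f k n) \<partial>count_space UNIV)"
    by (rule nn_integral_suminf[symmetric]) auto
  also have "\<dots> = (\<Sum>n. \<Sum>k. f k n)" by (simp add: nn_integral_count_space_nat)
  finally show ?thesis .
qed

lemma cube_le: "(Suc k)^3 \<le> 8 * 2^k"
proof (induction k)
  case 0 then show ?case by simp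
next
  case (Suc k)
  show ?case
  proof (cases "k < 3")
    case True
    then have "k = 0 \<or> k = 1 \<or> k = 2" by auto
    then show ?thesis by (auto simp: eval_nat_numeral)
  next
    case False
    then have k3: "3 \<le> k" by simp
    have "(Suc (Suc k))^3 \<le> 2 * (Suc k)^3"
    proof -
      define m where "m = Suc k"
      have m: "4 \<le> m" using k3 by (simp add: m_def)
      have e: "(Suc m)^3 = m^3 + 3*m^2 + 3*m + 1" by (simp add: power3_eq_cube power2_eq_square algebra_simps)
      have l: "3*m^2 + 3*m + 1 \<le> m^3"
      proof -
        have "4 * m^2 \<le> m * m^2" using m by (intro mult_right_mono) auto
        moreover have "3*m + 1 \<le> m^2"
        proof -
          have "4 * m \<le> m * m" using m by (intro mult_right_mono) auto
          from this m have "3*m+1 \<le> m*m" by linarith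
          then show ?thesis by (simp add: power2_eq_square)
        qed
        moreover have "m^3 = m * m^2" by (simp add: power3_eq_cube power2_eq_square)
        ultimately show ?thesis by linarith
      qed
      have "(Suc m)^3 \<le> 2 * m^3" using e l by linarith
      then show ?thesis unfolding m_def .
    qed
    also have "\<dots> \<le> 2 * (8 * 2^k)" using Suc.IH by simp
    finally show ?thesis by simp
  qed
qed

lemma cube_le_real: "(real (Suc k))^3 \<le> 8 * 2^k"
proof -
  have "real ((Suc k)^3) \<le> real (8 * 2^k)" using cube_le[of k] by linarith
  then show ?thesis by simp
qed

lemma rho_bounds: "0 \<le> 1 - 1/(2::real)^(Suc k)" "1 - 1/(2::real)^(Suc k) \<le> 1" "(1::real)/2^(Suc k) \<le> 1"
proof -
  have "(1::real) \<le> 2^(Suc k)" by (rule one_le_power) simp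
  then show "0 \<le> 1 - 1/(2::real)^(Suc k)" "1 - 1/(2::real)^(Suc k) \<le> 1" "(1::real)/2^(Suc k) \<le> 1" by auto
qed

definition wfn :: "nat \<Rightarrow> nat \<Rightarrow> real" where
  "wfn n k = (real (Suc k))^3 / 4^k * (1 - 1/2^(Suc k))^(2*n)"

lemma wf_nonneg: "0 \<le> wfn n k"
proof -
  have "(1::real)/2^(Suc k) \<le> 1" by (rule rho_bounds)
  then show ?thesis unfolding wfn_def by (intro mult_nonneg_nonneg divide_nonneg_pos zero_le_power) auto
qed

lemma wf_le_geom: "wfn n k \<le> 8 * (1/2)^k"
proof -
  have r: "(0::real) \<le> 1 - 1/2^(Suc k)" "1 - 1/2^(Suc k) \<le> (1::real)"
    using rho_bounds[of k] by auto
  have "(1 - 1/2^(Suc k))^(2*n) \<le> (1::real)" using r by (intro power_le_one) auto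
  then have "wfn n k \<le> (real (Suc k))^3 / 4^k" unfolding wfn_def by (intro mult_left_le) auto
  also have "\<dots> \<le> 8 * 2^k / 4^k" using cube_le_real[of k] by (simp add: divide_right_mono)
  also have "(4::real)^k = 2^k * 2^k" by (simp add: power_mult_distrib[symmetric])
  then have "8 * 2^k / (4::real)^k = 8 * (1/2)^k" by (simp add: power_divide)
  finally show ?thesis by simp
qed

lemma summable_wf: "summable (wfn n)"
  by (rule summable_comparison_test'[of "\<lambda>k. 8 * (1/2)^k" 0])
     (auto simp: wf_nonneg wf_le_geom intro!: summable_mult summable_geometric)

lemma sum_pow2_le: "(\<Sum>k<K. (2::real)^k) \<le> 2^K"
  by (induction K) auto

lemma Wsum:
  assumes n: "1 \<le> n"
  shows "suminf (wfn n) \<le> 364 * (2 / ln 2)^3 * (ln (real (Suc n)))^3 / (real (Suc n))^2"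
proof -
  obtain K where K: "2^K \<le> n" "n < 2^(K+1)" using ex_power_ivl1[of 2 n] n by auto
  have nr: "(2::real)^K \<le> real n" "real n < 2^(K+1)"
    using K by (metis of_nat_le_iff of_nat_numeral of_nat_power) (metis K(2) of_nat_less_iff of_nat_numeral of_nat_power)
  have n0: "0 < real n" using n by simp
  have split: "suminf (wfn n) = (\<Sum>j. wfn n (j + K)) + (\<Sum>k<K. wfn n k)"
    by (rule suminf_split_initial_segment[OF summable_wf])
  have head: "(\<Sum>k<K. wfn n k) \<le> 27 * (real K + 1)^3 / (real n)^2"
  proof -
    have b: "wfn n k \<le> 27 * (real K + 1)^3 / (real n)^3 * 2^k" if k: "k < K" for k
    proof -
      define y where "y = real n / 2^k"
      have y: "0 < y" unfolding y_def using n0 by simp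
      have "1 - 1/2^(Suc k) \<le> exp (- (1/(2::real)^(Suc k)))" using exp_ge_add_one_self[of "- (1/(2::real)^(Suc k))"] by simp
      then have "(1 - 1/2^(Suc k))^(2*n) \<le> exp (- (1/(2::real)^(Suc k)))^(2*n)"
        by (intro power_mono) (use rho_bounds in auto)
      also have "\<dots> = exp (- y)" unfolding y_def by (simp add: exp_of_nat_mult[symmetric] field_simps)
      also have "\<dots> \<le> 27 / y^3"
      proof -
        have "y^3 \<le> real 3 ^ 3 * exp y" using y by (intro powexp) auto
        then show ?thesis using y by (simp add: exp_minus field_simps)
      qed
      finally have e: "(1 - 1/2^(Suc k))^(2*n) \<le> 27 / y^3" .
      have c: "(real (Suc k))^3 \<le> (real K + 1)^3" using k by (intro power_mono) auto
      have "wfn n k \<le> (real K + 1)^3 / 4^k * (27 / y^3)"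
        unfolding wfn_def using c e by (intro mult_mono divide_right_mono) (auto simp: wf_nonneg)
      also have "\<dots> = 27 * (real K + 1)^3 / (real n)^3 * 2^k"
      proof -
        have "(4::real)^k = 2^k * 2^k" by (simp add: power_mult_distrib[symmetric])
        then show ?thesis unfolding y_def using n0 by (simp add: power_divide field_simps power3_eq_cube)
      qed
      finally show ?thesis .
    qed
    have "(\<Sum>k<K. wfn n k) \<le> (\<Sum>k<K. 27 * (real K + 1)^3 / (real n)^3 * 2^k)"
      by (intro sum_mono b) auto
    also have "\<dots> = 27 * (real K + 1)^3 / (real n)^3 * (\<Sum>k<K. 2^k)" by (simp add: sum_distrib_left)
    also have "\<dots> \<le> 27 * (real K + 1)^3 / (real n)^3 * real n"
    proof -
      have sK: "(\<Sum>k<K. (2::real)^k) \<le> real n" using sum_pow2_le[of K] nr by linarith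
      show ?thesis using sK n0 by (intro mult_left_mono) auto
    qed
    also have "\<dots> = 27 * (real K + 1)^3 / (real n)^2" using n0 by (simp add: power3_eq_cube power2_eq_square)
    finally show ?thesis .
  qed
  have tail: "(\<Sum>j. wfn n (j + K)) \<le> 64 * (real K + 1)^3 / (real n)^2"
  proof -
    have b: "wfn n (j + K) \<le> (real K + 1)^3 / 4^K * (8 * (1/2)^j)" for j
    proof -
      have r: "(0::real) \<le> 1 - 1/2^(Suc (j+K))" "1 - 1/2^(Suc (j+K)) \<le> (1::real)" using rho_bounds[of "j+K"] by auto
      have "(1 - 1/2^(Suc (j+K)))^(2*n) \<le> (1::real)" using r by (intro power_le_one) auto
      then have "wfn n (j + K) \<le> (real (Suc (j+K)))^3 / 4^(j+K)" unfolding wfn_def by (intro mult_left_le) auto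
      also have "(real (Suc (j+K)))^3 \<le> ((real K + 1) * real (Suc j))^3"
        by (intro power_mono) (auto simp: algebra_simps)
      also have "((real K + 1) * real (Suc j))^3 / 4^(j+K) = (real K + 1)^3 / 4^K * ((real (Suc j))^3 / 4^j)"
        by (simp add: power_mult_distrib power_add)
      also have "(real (Suc j))^3 / 4^j \<le> 8 * (1/2)^j"
      proof -
        have "(real (Suc j))^3 / 4^j \<le> 8 * 2^j / 4^j" using cube_le_real[of j] by (simp add: divide_right_mono)
        also have "(4::real)^j = 2^j * 2^j" by (simp add: power_mult_distrib[symmetric])
        then have "8 * 2^j / (4::real)^j = 8 * (1/2)^j" by (simp add: power_divide)
        finally show ?thesis by simp
      qed
      finally show ?thesis by (simp add: divide_right_mono mult_left_mono)
    qed
    have sg: "summable (\<lambda>j. (real K + 1)^3 / 4^K * (8 * (1/2::real)^j))"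
      by (intro summable_mult summable_geometric) auto
    have "(\<Sum>j. wfn n (j + K)) \<le> (\<Sum>j. (real K + 1)^3 / 4^K * (8 * (1/2)^j))"
      by (rule suminf_le[OF b summable_ignore_initial_segment[OF summable_wf] sg])
    also have "\<dots> = (real K + 1)^3 / 4^K * 16"
    proof -
      have "(\<Sum>j. 8 * (1/2::real)^j) = 8 * 2" using suminf_geometric[of "1/2::real"] by (subst suminf_mult) auto
      then show ?thesis by (subst suminf_mult) (auto intro: summable_mult summable_geometric)
    qed
    also have "\<dots> \<le> 64 * (real K + 1)^3 / (real n)^2"
    proof -
      have "(real n)^2 \<le> (2^(K+1))^2" using nr n0 by (intro power_mono) auto
      also have "((2::real)^(K+1))^2 = 4 * 4^K" by (simp add: power_mult_distrib[symmetric] power_add power2_eq_square)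
      finally have "(real n)^2 \<le> 4 * 4^K" .
      then show ?thesis using n0 by (simp add: field_simps)
    qed
    finally show ?thesis .
  qed
  have Kl: "(real K + 1) * ln 2 \<le> 2 * ln (real (Suc n))"
  proof -
    have "real K * ln 2 = ln (2^K)" by (simp add: ln_realpow)
    also have "\<dots> \<le> ln (real (Suc n))"
    proof -
      have "(2::real)^K \<le> real (Suc n)" using nr(1) unfolding of_nat_Suc by linarith
      then show ?thesis by simp
    qed
    finally have a: "real K * ln 2 \<le> ln (real (Suc n))" .
    have "ln 2 \<le> ln (real (Suc n))" using n by simp
    then show ?thesis using a by (simp only: distrib_right mult_1_left)
  qed
  have Kb: "(real K + 1)^3 \<le> (2 / ln 2)^3 * (ln (real (Suc n)))^3"
  proof -
    have "real K + 1 \<le> 2 / ln 2 * ln (real (Suc n))" using Kl by (simp add: field_simps)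
    then have "(real K + 1)^3 \<le> (2 / ln 2 * ln (real (Suc n)))^3" by (rule power_mono) simp
    then show ?thesis by (simp only: power_mult_distrib)
  qed
  have nn: "1 / (real n)^2 \<le> 4 / (real (Suc n))^2"
  proof -
    have "(real (Suc n))^2 \<le> (2 * real n)^2" using n by (intro power_mono) auto
    then show ?thesis using n0 by (simp add: field_simps power_mult_distrib)
  qed
  have "suminf (wfn n) \<le> 91 * (real K + 1)^3 / (real n)^2" using split head tail by simp
  also have "\<dots> = 91 * (real K + 1)^3 * (1 / (real n)^2)" by simp
  also have "\<dots> \<le> 91 * ((2 / ln 2)^3 * (ln (real (Suc n)))^3) * (4 / (real (Suc n))^2)"
    using Kb nn by (intro mult_mono) auto
  also have "\<dots> = 364 * (2 / ln 2)^3 * (ln (real (Suc n)))^3 / (real (Suc n))^2" by simp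
  finally show ?thesis .
qed


lemma bound_a:
  assumes "summable (\<lambda>n. (norm (a (Suc n)))\<^sup>2 * (ln (real (Suc n))) ^ 3)"
  shows "\<exists>B. \<forall>n. norm (a (Suc n)) \<le> B"
proof -
  define g where "g n = (norm (a (Suc n)))\<^sup>2 * (ln (real (Suc n))) ^ 3" for n
  have "g \<longlonglongrightarrow> 0" unfolding g_def using assms by (rule summable_LIMSEQ_zero)
  then have "Bseq g" using convergent_imp_Bseq convergentI by blast
  then obtain K where K: "0 < K" "\<And>n. norm (g n) \<le> K" by (auto elim: BseqE)
  have big: "norm (a (Suc n)) \<le> sqrt K" if n: "2 \<le> n" for n
  proof -
    have "1 \<le> ln (3::real)" using exp_le by (subst ln_ge_iff) auto
    also have "ln 3 \<le> ln (real (Suc n))" using n by simp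
    finally have l: "1 \<le> ln (real (Suc n))" .
    then have "1 \<le> (ln (real (Suc n)))^3" by (simp add: one_le_power)
    then have "(norm (a (Suc n)))\<^sup>2 \<le> g n" unfolding g_def by (simp add: mult_le_cancel_left1)
    also have "\<dots> \<le> K" using K(2)[of n] by simp
    finally show ?thesis by (simp add: real_le_rsqrt)
  qed
  have "norm (a (Suc n)) \<le> sqrt K + norm (a 1) + norm (a 2)" for n
  proof (cases "2 \<le> n")
    case False
    then have "n = 0 \<or> n = 1" by auto
    moreover have "0 \<le> sqrt K" using K by simp
    ultimately show ?thesis using norm_ge_zero[of "a 1"] norm_ge_zero[of "a 2"] by (auto simp: numeral_2_eq_2)
  next
    case True
    then have "norm (a (Suc n)) \<le> sqrt K" using big by blast
    then show ?thesis by (smt (verit) norm_ge_zero)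
  qed
  then show ?thesis by blast
qed

lemma r_in_Ik: assumes r: "0 \<le> r" "r < 1" shows "\<exists>k. r \<in> Ik k"
proof -
  define x where "x = 1 / (1 - r)"
  have x: "1 \<le> x" unfolding x_def using r by simp
  define m where "m = nat (floor x)"
  have m1: "1 \<le> m" unfolding m_def using x by linarith
  have mx: "real m \<le> x" "x < real m + 1" unfolding m_def using x by linarith+
  obtain k where k: "2^k \<le> m" "m < 2^(k+1)" using ex_power_ivl1[of 2 m] m1 by auto
  have k1: "real (2^k) \<le> real m" using k(1) by (simp only: of_nat_le_iff)
  have k2: "real (m + 1) \<le> real (2^(k+1))" using k(2) by (simp only: of_nat_le_iff)
  have k': "(2::real)^k \<le> real m" "real m + 1 \<le> 2^(k+1)" using k1 k2 by simp_all
  have a: "(2::real)^k \<le> x" using k' mx by linarith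
  have b: "x < 2^(Suc k)" using k' mx by simp
  have "1 - r = 1 / x" unfolding x_def using r by simp
  then have "1 - r \<le> 1/2^k" "1/2^(Suc k) < 1 - r" using a b x by (auto simp: frac_le divide_strict_left_mono)
  then show ?thesis unfolding Ik_def by (intro exI[of _ k]) auto
qed

lemma Ik_measure: "emeasure lborel (Ik k) = ennreal (1/2^(Suc k))"
proof -
  have "(1::real) - 1/2^k \<le> 1 - 1/2^(Suc k)" by (simp add: field_simps)
  then have "emeasure lborel (Ik k) = ennreal ((1 - 1/2^(Suc k)) - (1 - 1/2^k))"
    unfolding Ik_def by (rule emeasure_lborel_Ico)
  also have "(1 - 1/2^(Suc k)) - (1 - 1/(2::real)^k) = 1/2^(Suc k)" by (simp add: field_simps)
  finally show ?thesis .
qed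


definition C1 :: "real \<Rightarrow> real" where "C1 B = 720 + 2 * (C0 B)^2"

lemma sig_mono: "0 \<le> r \<Longrightarrow> r \<le> r' \<Longrightarrow> sig a k r \<le> sig a k r'"
  unfolding sig_def by (intro sum_mono mult_left_mono power_mono) auto

lemma EXb_bound:
  assumes rk: "r \<in> Ik k" and r0: "0 \<le> r"
  shows "(1-r) * (Lg r)^2 * (2 * sv a k r + 2 * (C0 B)^2 + 32 * exp 1 * sig a k r)
      \<le> C1 B * (real (Suc k))^3 / 2^k * (sig a k (1 - 1/2^(Suc k)) + 1)"
proof -
  define \<rho> :: real where "\<rho> = 1 - 1/2^(Suc k)"
  have r1: "r < 1" and rk2: "1/2^(Suc k) \<le> 1 - r" and rk3: "1 - r \<le> 1/2^k" using Ik_props[OF rk] by auto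
  have r\<rho>: "r \<le> \<rho>" unfolding \<rho>_def using rk2 by simp
  define \<sigma> where "\<sigma> = sig a k \<rho>"
  define \<sigma>r where "\<sigma>r = sig a k r"
  have \<sigma>r0: "0 \<le> \<sigma>r" unfolding \<sigma>r_def using r0 by (rule sig_nonneg)
  have \<sigma>r: "\<sigma>r \<le> \<sigma>" unfolding \<sigma>r_def \<sigma>_def using r0 r\<rho> by (rule sig_mono)
  define K where "K = real (Suc k)"
  have K1: "1 \<le> K" unfolding K_def by simp
  have L0: "0 \<le> Lg r" unfolding Lg_def using r0 r1 by simp
  have LK: "Lg r \<le> K"
  proof -
    have "1 / (1 - r) \<le> 2^(Suc k)" using rk2 r1 by (simp add: field_simps)
    then have "Lg r \<le> ln (2^(Suc k))" unfolding Lg_def using r1 by (subst ln_le_cancel_iff) auto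
    also have "\<dots> = K * ln 2" unfolding K_def by (rule ln_realpow)
    also have "\<dots> \<le> K * 1" using ln2_le_25_over_36 K1 by (intro mult_left_mono) auto
    finally show ?thesis by simp
  qed
  have L2: "(Lg r)^2 \<le> K^2" using L0 LK by (intro power_mono) auto
  have p: "real (pk k) \<le> 13 * K" unfolding pk_def K_def by simp
  have e3: "exp 1 \<le> (3::real)" by (rule exp_le)
  have I1: "2 * sv a k r \<le> 624 * K * (\<sigma> + 1)"
  proof -
    have "2 * sv a k r = 16 * exp 1 * real (pk k) * (\<sigma>r + 1)" unfolding sv_def \<sigma>r_def by simp
    also have "\<dots> \<le> 16 * 3 * (13 * K) * (\<sigma> + 1)"
      using e3 p \<sigma>r \<sigma>r0 by (intro mult_mono) auto
    finally show ?thesis by simp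
  qed
  have I2: "32 * exp 1 * \<sigma>r \<le> 96 * K * (\<sigma> + 1)"
  proof -
    have "32 * exp 1 * \<sigma>r \<le> 32 * 3 * (\<sigma> + 1)" using e3 \<sigma>r \<sigma>r0 by (intro mult_mono) auto
    also have "\<dots> \<le> 96 * K * (\<sigma> + 1)"
    proof -
      have "1 * (96 * (\<sigma> + 1)) \<le> K * (96 * (\<sigma> + 1))" using K1 \<sigma>r \<sigma>r0 by (intro mult_right_mono) auto
      then show ?thesis by (simp add: algebra_simps)
    qed
    finally show ?thesis .
  qed
  have I3: "2 * (C0 B)^2 \<le> 2 * (C0 B)^2 * (K * (\<sigma> + 1))"
  proof -
    have "1 * 1 \<le> K * (\<sigma> + 1)" using K1 \<sigma>r \<sigma>r0 by (intro mult_mono) auto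
    then have "1 \<le> K * (\<sigma> + 1)" by simp
    then show ?thesis by (simp add: mult_le_cancel_left1)
  qed
  have I: "2 * sv a k r + 2 * (C0 B)^2 + 32 * exp 1 * \<sigma>r \<le> C1 B * K * (\<sigma> + 1)"
    using I1 I2 I3 unfolding C1_def by (simp add: algebra_simps)
  have Ipos: "0 \<le> 2 * sv a k r + 2 * (C0 B)^2 + 32 * exp 1 * \<sigma>r"
    using sv_pos[OF r0, of a k] \<sigma>r0 by simp
  have "(1-r) * (Lg r)^2 * (2 * sv a k r + 2 * (C0 B)^2 + 32 * exp 1 * \<sigma>r) \<le> (1/2^k) * K^2 * (C1 B * K * (\<sigma> + 1))"
    using rk3 L2 I Ipos r1 by (intro mult_mono) auto
  also have "\<dots> = C1 B * K^3 / 2^k * (\<sigma> + 1)" by (simp add: power2_eq_square power3_eq_cube)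
  finally show ?thesis unfolding K_def \<sigma>_def \<rho>_def \<sigma>r_def .
qed


lemma C1_nonneg: "0 \<le> C1 B" unfolding C1_def by simp

lemma step1:
  "C1 B * (real (Suc k))^3 / 2^k * (sig a k (1 - 1/2^(Suc k)) + 1) * (1/2^(Suc k))
     \<le> C1 B * wfn 0 k + (\<Sum>n<Nk k. C1 B * (cmod (cc a n))^2 * wfn n k)"
proof -
  define \<rho> :: real where "\<rho> = 1 - 1/2^(Suc k)"
  define u :: real where "u = (real (Suc k))^3 / 4^k"
  have u0: "0 \<le> u" unfolding u_def by simp
  have w0: "wfn 0 k = u" unfolding wfn_def u_def by simp
  have ws: "(\<Sum>n<Nk k. C1 B * (cmod (cc a n))^2 * wfn n k) = C1 B * (u * sig a k \<rho>)"
    unfolding sig_def wfn_def u_def \<rho>_def by (simp add: sum_distrib_left mult_ac)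
  have s0: "0 \<le> sig a k \<rho>" unfolding \<rho>_def by (rule sig_nonneg) (use rho_bounds[of k] in auto)
  have "(real (Suc k))^3 / 2^k * (sig a k \<rho> + 1) * (1/2^(Suc k)) = u * (sig a k \<rho> + 1) / 2"
  proof -
    have "(2::real)^k * 2^(Suc k) = 2 * 4^k" by (simp add: power_mult_distrib[symmetric])
    then show ?thesis unfolding u_def by (simp add: field_simps)
  qed
  also have "\<dots> \<le> u * sig a k \<rho> + u" using u0 s0 by (simp add: field_simps)
  finally have "(real (Suc k))^3 / 2^k * (sig a k \<rho> + 1) * (1/2^(Suc k)) \<le> u * sig a k \<rho> + u" .
  then have "C1 B * ((real (Suc k))^3 / 2^k * (sig a k \<rho> + 1) * (1/2^(Suc k))) \<le> C1 B * (u * sig a k \<rho> + u)"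
    using C1_nonneg by (rule mult_left_mono)
  then show ?thesis unfolding ws w0 \<rho>_def by (simp add: algebra_simps)
qed

lemma fin:
  assumes hyp: "summable (\<lambda>n. (norm (a (Suc n)))\<^sup>2 * (ln (real (Suc n))) ^ 3)"
  shows "(\<Sum>k. ennreal (C1 B * (real (Suc k))^3 / 2^k * (sig a k (1 - 1/2^(Suc k)) + 1) * (1/2^(Suc k)))) < \<infinity>" (is "?L < _")
proof -
  define f where "f k n = ennreal (C1 B * (cmod (cc a n))^2 * wfn n k)" for k n
  define g where "g n = (norm (a (Suc n)))\<^sup>2 * (ln (real (Suc n))) ^ 3" for n
  define c :: real where "c = 364 * (2 / ln 2)^3"
  define h where "h n = C1 B * (c * g n + (if n = 0 then (cmod (cc a 0))^2 * suminf (wfn 0) else 0))" for n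
  have wf0: "0 \<le> wfn n k" for n k by (rule wf_nonneg)
  have step2: "ennreal (C1 B * (real (Suc k))^3 / 2^k * (sig a k (1 - 1/2^(Suc k)) + 1) * (1/2^(Suc k)))
      \<le> ennreal (C1 B * wfn 0 k) + (\<Sum>n. f k n)" for k
  proof -
    have "ennreal (C1 B * (real (Suc k))^3 / 2^k * (sig a k (1 - 1/2^(Suc k)) + 1) * (1/2^(Suc k)))
       \<le> ennreal (C1 B * wfn 0 k + (\<Sum>n<Nk k. C1 B * (cmod (cc a n))^2 * wfn n k))"
      by (rule ennreal_leI[OF step1])
    also have "\<dots> = ennreal (C1 B * wfn 0 k) + (\<Sum>n<Nk k. f k n)"
      unfolding f_def using C1_nonneg wf0
      by (subst ennreal_plus) (auto intro!: sum_nonneg simp: sum_ennreal)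
    also have "(\<Sum>n<Nk k. f k n) \<le> (\<Sum>n. f k n)"
      by (rule sum_le_suminf) auto
    finally show ?thesis by (simp add: add_left_mono)
  qed
  have "(\<Sum>k. ennreal (C1 B * (real (Suc k))^3 / 2^k * (sig a k (1 - 1/2^(Suc k)) + 1) * (1/2^(Suc k))))
      \<le> (\<Sum>k. ennreal (C1 B * wfn 0 k) + (\<Sum>n. f k n))"
    by (rule suminf_le[OF step2]) auto
  also have "\<dots> = (\<Sum>k. ennreal (C1 B * wfn 0 k)) + (\<Sum>k. \<Sum>n. f k n)"
    by (rule suminf_add[symmetric]) auto
  also have "(\<Sum>k. ennreal (C1 B * wfn 0 k)) = ennreal (\<Sum>k. C1 B * wfn 0 k)"
    using C1_nonneg wf0 by (intro suminf_ennreal2 summable_mult summable_wf) auto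
  also have "(\<Sum>k. \<Sum>n. f k n) = (\<Sum>n. \<Sum>k. f k n)" by (rule ennreal_swap)
  also have "\<dots> = (\<Sum>n. ennreal (\<Sum>k. C1 B * (cmod (cc a n))^2 * wfn n k))"
    unfolding f_def using C1_nonneg wf0 by (intro suminf_cong suminf_ennreal2 summable_mult summable_wf) auto
  also have "\<dots> \<le> (\<Sum>n. ennreal (h n))"
  proof (intro suminf_le ennreal_leI)
    fix n
    have e: "(\<Sum>k. C1 B * (cmod (cc a n))^2 * wfn n k) = C1 B * ((cmod (cc a n))^2 * suminf (wfn n))"
      by (subst suminf_mult[OF summable_wf]) (simp add: mult_ac)
    have g0: "0 \<le> g n" unfolding g_def by simp
    have c0: "0 \<le> c" unfolding c_def using ln2_le_25_over_36 by simp
    have "(cmod (cc a n))^2 * suminf (wfn n) \<le> c * g n + (if n = 0 then (cmod (cc a 0))^2 * suminf (wfn 0) else 0)"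
    proof (cases "n = 0")
      case True then show ?thesis using c0 g0 by simp
    next
      case False
      then have n1: "1 \<le> n" by simp
      have cc2: "(cmod (cc a n))^2 = (real (Suc n))^2 * (norm (a (Suc n)))^2"
        unfolding cc_def norm_mult norm_of_nat by (simp add: power_mult_distrib)
      have "(cmod (cc a n))^2 * suminf (wfn n) \<le> (cmod (cc a n))^2 * (c * (ln (real (Suc n)))^3 / (real (Suc n))^2)"
        using Wsum[OF n1] unfolding c_def by (intro mult_left_mono) auto
      also have "\<dots> = c * g n" unfolding cc2 g_def by (simp add: field_simps)
      finally show ?thesis using False by simp
    qed
    then show "(\<Sum>k. C1 B * (cmod (cc a n))^2 * wfn n k) \<le> h n"
      unfolding e h_def using C1_nonneg by (intro mult_left_mono) auto
  qed auto
  also have "(\<Sum>n. ennreal (h n)) = ennreal (suminf h)"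
  proof (rule suminf_ennreal2)
    show "0 \<le> h n" for n unfolding h_def g_def c_def
      using C1_nonneg ln2_le_25_over_36 suminf_nonneg[OF summable_wf wf_nonneg, of 0]
      by (intro mult_nonneg_nonneg add_nonneg_nonneg) auto
    have "summable (\<lambda>n. c * g n)" unfolding g_def using hyp by (rule summable_mult)
    moreover have "summable (\<lambda>n. if n = 0 then (cmod (cc a 0))^2 * suminf (wfn 0) else 0)"
      by (rule sums_summable[OF sums_single])
    ultimately have "summable (\<lambda>n. c * g n + (if n = 0 then (cmod (cc a 0))^2 * suminf (wfn 0) else 0))"
      by (rule summable_add)
    then show "summable h" unfolding h_def by (rule summable_mult)
  qed
  finally have "?L \<le> ennreal (\<Sum>k. C1 B * wfn 0 k) + ennreal (suminf h)" by (auto intro: add_left_mono)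
  moreover have "ennreal (\<Sum>k. C1 B * wfn 0 k) + ennreal (suminf h) < \<infinity>" by simp
  ultimately show ?thesis by (rule le_less_trans)
qed


definition bnd :: "(nat \<Rightarrow> complex) \<Rightarrow> real \<Rightarrow> nat \<Rightarrow> real" where
  "bnd a B k = C1 B * (real (Suc k))^3 / 2^k * (sig a k (1 - 1/2^(Suc k)) + 1)"

lemma Ik_sets[measurable]: "Ik k \<in> sets lborel" unfolding Ik_def by simp
lemma Ik_borel[measurable, simp]: "Ik k \<in> sets borel" unfolding Ik_def by simp

theorem mainTheorem12:
  fixes a :: "nat \<Rightarrow> complex"
  assumes "summable (\<lambda>n. (norm (a (Suc n)))\<^sup>2 * (ln (real (Suc n))) ^ 3)"
  shows "AE t in lborel. t \<in> {0..1} \<longrightarrow>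
    (\<integral>\<^sup>+ r. indicator {0<..<1} r *
        ennreal ((1 - r) * (ln (1 / (1 - r)))\<^sup>2 * (Minf r (deriv (rad_series a t)))\<^sup>2) \<partial>lborel) < \<infinity>"
proof -
  note hyp = assms
  obtain B where B: "\<And>n. norm (a (Suc n)) \<le> B" using bound_a[OF hyp] by blast
  define \<Phi> where "\<Phi> r t = (\<Sum>k. indicator (Ik k) r * ennreal (Gk a B k r t))" for r t
  have \<Phi>m: "(\<lambda>x. \<Phi> (fst x) (snd x)) \<in> borel_measurable (lborel \<Otimes>\<^sub>M lborel)"
    unfolding \<Phi>_def Gk_def sv_def sig_def Lg_def P_def Ik_def by measurable
  have \<Phi>m2: "(\<lambda>x. \<Phi> (snd x) (fst x)) \<in> borel_measurable (lborel \<Otimes>\<^sub>M lborel)"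
    unfolding \<Phi>_def Gk_def sv_def sig_def Lg_def P_def Ik_def by measurable
  have \<Phi>m3: "(\<lambda>x. indicator {0..<1::real} (snd x) * \<Phi> (fst x) (snd x)) \<in> borel_measurable (lborel \<Otimes>\<^sub>M lborel)"
    unfolding \<Phi>_def Gk_def sv_def sig_def Lg_def P_def Ik_def by measurable
  have \<Phi>r: "(\<lambda>r. \<Phi> r t) \<in> borel_measurable lborel" for t
    unfolding \<Phi>_def Gk_def sv_def sig_def Lg_def P_def Ik_def by measurable
  have pw: "indicator {0<..<1} r * ennreal ((1 - r) * (ln (1 / (1 - r)))\<^sup>2 * (Minf r (deriv (rad_series a t)))\<^sup>2) \<le> \<Phi> r t" for r t
  proof (cases "r \<in> {0<..<1}")
    case False then show ?thesis by simp
  next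
    case True
    then obtain k where k: "r \<in> Ik k" using r_in_Ik[of r] by auto
    have "ennreal ((1 - r) * (ln (1 / (1 - r)))\<^sup>2 * (Minf r (deriv (rad_series a t)))\<^sup>2) \<le> ennreal (Gk a B k r t)"
      using PW[where a=a and B=B and r=r and k=k and t=t] B k True unfolding Lg_def by (intro ennreal_leI) auto
    also have "\<dots> = indicator (Ik k) r * ennreal (Gk a B k r t)" using k by simp
    also have "\<dots> \<le> \<Phi> r t"
    proof -
      have gen: "F k \<le> suminf F" for F :: "nat \<Rightarrow> ennreal"
      proof -
        have "(\<Sum>i\<in>{k}. F i) \<le> suminf F" by (rule sum_le_suminf) auto
        then show ?thesis by simp
      qed
      show ?thesis unfolding \<Phi>_def by (rule gen)
    qed
    finally show ?thesis using True by simp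
  qed
  define \<Psi> where "\<Psi> t = (\<integral>\<^sup>+ r. \<Phi> r t \<partial>lborel)" for t
  have \<Psi>m: "\<Psi> \<in> borel_measurable lborel"
  proof -
    have "(\<lambda>t. \<integral>\<^sup>+ r. \<Phi> r t \<partial>lborel) \<in> borel_measurable lborel"
      by (rule lborel.borel_measurable_nn_integral) (use \<Phi>m2 in \<open>simp add: case_prod_beta'\<close>)
    then show ?thesis unfolding \<Psi>_def .
  qed
  have inner: "(\<integral>\<^sup>+ t. indicator {0..<1::real} t * \<Phi> r t \<partial>lborel) \<le> (\<Sum>k. indicator (Ik k) r * ennreal (bnd a B k))" for r
  proof -
    have "(\<integral>\<^sup>+ t. indicator {0..<1::real} t * \<Phi> r t \<partial>lborel) = (\<integral>\<^sup>+ t. (\<Sum>k. indicator (Ik k) r * (indicator {0..<1::real} t * ennreal (Gk a B k r t))) \<partial>lborel)"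
      unfolding \<Phi>_def by (intro nn_integral_cong) (simp add: ennreal_suminf_cmult[symmetric] mult_ac)
    also have "\<dots> = (\<Sum>k. (\<integral>\<^sup>+ t. indicator (Ik k) r * (indicator {0..<1::real} t * ennreal (Gk a B k r t)) \<partial>lborel))"
      by (rule nn_integral_suminf) (unfold Gk_def sv_def sig_def Lg_def P_def, measurable)
    also have "\<dots> = (\<Sum>k. indicator (Ik k) r * (\<integral>\<^sup>+ t. indicator {0..<1::real} t * ennreal (Gk a B k r t) \<partial>lborel))"
      by (intro suminf_cong nn_integral_cmult) (unfold Gk_def sv_def sig_def Lg_def P_def, measurable)
    also have "\<dots> \<le> (\<Sum>k. indicator (Ik k) r * ennreal (bnd a B k))"
    proof (intro suminf_le)
      fix k
      show "indicator (Ik k) r * (\<integral>\<^sup>+ t. indicator {0..<1::real} t * ennreal (Gk a B k r t) \<partial>lborel) \<le> indicator (Ik k) r * ennreal (bnd a B k)"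
      proof (cases "r \<in> Ik k")
        case False then show ?thesis by simp
      next
        case True
        have r0': "0 \<le> r"
        proof -
          have h: "(1::real)/2^k \<le> 1" by simp
          have m: "1 - 1/2^k \<le> r" using True unfolding Ik_def by simp
          show ?thesis using h m by linarith
        qed
        have r1: "r < 1" using Ik_props[OF True] by simp
        have "(\<integral>\<^sup>+ t. indicator {0..<1::real} t * ennreal (Gk a B k r t) \<partial>lborel)
           \<le> ennreal ((1-r) * (Lg r)^2 * (2 * sv a k r + 2 * (C0 B)^2 + 32 * exp 1 * sig a k r))"
          using EX[OF r0' r1] by simp
        also have "\<dots> \<le> ennreal (bnd a B k)" unfolding bnd_def
          by (intro ennreal_leI EXb_bound[OF True r0'])
        finally show ?thesis using True by simp
      qed
    qed auto
    finally show ?thesis .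
  qed
  have "(\<integral>\<^sup>+ t. indicator {0..<1::real} t * \<Psi> t \<partial>lborel) = (\<integral>\<^sup>+ t. (\<integral>\<^sup>+ r. indicator {0..<1::real} t * \<Phi> r t \<partial>lborel) \<partial>lborel)"
    unfolding \<Psi>_def by (intro nn_integral_cong nn_integral_cmult[symmetric] \<Phi>r)
  also have "\<dots> = (\<integral>\<^sup>+ r. (\<integral>\<^sup>+ t. indicator {0..<1::real} t * \<Phi> r t \<partial>lborel) \<partial>lborel)"
    by (rule lborel_pair.Fubini'[where f="\<lambda>r t. indicator {0..<1::real} t * \<Phi> r t"]) (use \<Phi>m3 in \<open>simp add: case_prod_beta'\<close>)
  also have "\<dots> \<le> (\<integral>\<^sup>+ r. (\<Sum>k. indicator (Ik k) r * ennreal (bnd a B k)) \<partial>lborel)"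
    by (intro nn_integral_mono inner)
  also have "\<dots> = (\<Sum>k. (\<integral>\<^sup>+ r. ennreal (bnd a B k) * indicator (Ik k) r \<partial>lborel))"
    by (subst nn_integral_suminf) (auto simp: mult.commute)
  also have "\<dots> = (\<Sum>k. ennreal (bnd a B k) * emeasure lborel (Ik k))"
    by (intro suminf_cong nn_integral_cmult_indicator) simp
  also have "\<dots> = (\<Sum>k. ennreal (bnd a B k * (1/2^(Suc k))))"
  proof (intro suminf_cong)
    fix k
    have b0: "0 \<le> bnd a B k" unfolding bnd_def using C1_nonneg sig_nonneg[of "1 - 1/2^(Suc k)" a k] rho_bounds[of k]
      by (intro mult_nonneg_nonneg) auto
    show "ennreal (bnd a B k) * emeasure lborel (Ik k) = ennreal (bnd a B k * (1/2^(Suc k)))"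
      unfolding Ik_measure using b0 by (subst ennreal_mult) auto
  qed
  also have "\<dots> < \<infinity>" unfolding bnd_def by (rule fin[OF hyp])
  finally have fin\<Psi>: "(\<integral>\<^sup>+ t. indicator {0..<1::real} t * \<Psi> t \<partial>lborel) \<noteq> \<infinity>" by simp
  have AE1: "AE t in lborel. indicator {0..<1::real} t * \<Psi> t \<noteq> \<infinity>"
    by (rule nn_integral_PInf_AE[OF _ fin\<Psi>]) (use \<Psi>m in measurable)
  have AE2: "AE t in lborel. t \<noteq> 1"
    by (rule AE_I'[where N="{1}"]) auto
  show ?thesis
    using AE1 AE2
  proof eventually_elim
    case (elim t)
    show ?case
    proof
      assume t: "t \<in> {0..1}"
      then have t': "t \<in> {0..<1}" using elim(2) by auto
      then have "\<Psi> t \<noteq> \<infinity>" using elim(1) by simp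
      then have lt: "\<Psi> t < \<infinity>" by (simp add: less_top)
      have "(\<integral>\<^sup>+ r. indicator {0<..<1} r * ennreal ((1 - r) * (ln (1 / (1 - r)))\<^sup>2 * (Minf r (deriv (rad_series a t)))\<^sup>2) \<partial>lborel) \<le> \<Psi> t"
        unfolding \<Psi>_def by (intro nn_integral_mono pw)
      then show "(\<integral>\<^sup>+ r. indicator {0<..<1} r * ennreal ((1 - r) * (ln (1 / (1 - r)))\<^sup>2 * (Minf r (deriv (rad_series a t)))\<^sup>2) \<partial>lborel) < \<infinity>"
        using lt by (rule le_less_trans)
    qed
  qed
qed

end
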